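(* Let $H=(S_1,\dots,S_\ell)$ be a partial route. Then there exist $(\alpha,\beta)\in\mathcal{A}$ such that the projected scenario recourse inequality $$\sum_{v\in V_+:\,w_v>0}\phi_v(\alpha,\beta)\,\theta_v\ \ge\ \sum_{\xi\in[N]}\sum_{\emptyset\ne S\subseteq V_+}\alpha^\xi_S\,x(E(S))+\nu(\alpha,\beta)$$ dominates the inequality $\theta(V_+(H))\ge\mathcal{L}^*(H)\cdot W_{OF}(x;H)$, in the sense that for every $\bar x\in\mathcal{X}$, every $\theta\in\mathbb{R}^{V_+}_{\ge0}$ satisfying the projected inequality at $x=\bar x$ satisfies $\theta(V_+(H))\ge\mathcal{L}^*(H)\,W_{OF}(\bar x;H)$. In particular, $\theta(V_+(H))\ge\mathcal{L}^*(H)\,W_{OF}(x;H)$ is valid for $\mathcal{P}$.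
   Context: $G=(V,E)$ complete undirected graph, $V=\{0\}\cup V_+$ ($V_+$ customers); capacity $C>0$; scenarios $\xi\in[N]$ with demands $d^\xi\in\mathbb{Q}^{V_+}_{\ge0}$ ($d^\xi(v)\le C$) and probabilities $p_\xi\ge0$, $\sum_\xi p_\xi=1$. $f(S)=\sum_{i\in S}f(i)$; $k_\xi(S)=\lceil d^\xi(S)/C\rceil$; $\bar d=\sum_\xi p_\xi d^\xi$. $E(S)$: edges with both ends in $S$; $E(S,T)$: edges with one end in $S$ and one in $T$; $\delta(S)$: edges with exactly one end in $S$. $\mathcal{X}$ is one of $\mathcal{X}_{\mathrm{sub}}=\{x\in[0,2]^E: x(\delta(v))=2\ \forall v\in V_+,\ x(E(S))\le|S|-1\ \forall\emptyset\ne S\subseteq V_+\}$ or $\mathcal{X}_{\mathrm{cvrp}}=\mathcal{X}_{\mathrm{sub}}\cap\{x:x(\delta(0))=2k,\ x(E(S))\le|S|-\lceil\bar d(S)/C\rceil\}$. Fixed $w\in\mathbb{Q}^{V_+}_{\ge0}$, $b\in\mathbb{Z}^{V_+}_{\ge0}$ such that for every route $R$ the set $\Pi(R)\cap[\mathbf 0,b]^N$ is nonempty, where $\Pi(R)$ is the set of integer $y\ge0$ in $\mathbb{R}^{[N]\times V_+}$ such that for each $\xi$ and route $R=(v_1,\dots,v_\ell)$ (with $v_0=v_{\ell+1}=0$) there exist $f_{(v_{i-1},v_i)}\in[0,C]$ and $g_{v_i}\ge0$ with $f_{(v_{i-1},v_i)}+d^\xi(v_i)=f_{(v_i,v_{i+1})}+g_{v_i}$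 and $g_{v_i}\le Cy^\xi_{v_i}$; $[\mathbf 0,b]^N=\{y:0\le y^\xi_v\le b_v\}$. A partial route $H=(S_1,\dots,S_\ell)$ is a tuple of pairwise disjoint nonempty customer sets with no index $i$ such that both $S_i$ and $S_{i+1}$ are non-singletons; $V_+(H)=\bigcup_iS_i$; $H'\subseteq H$ means $H'=(S_i,\dots,S_j)$ with $1\le i\le j\le\ell$. $x(H)=\sum_{i\in[\ell]}x(E(S_i))+\sum_{i\in[\ell-1]}x(E(S_i,S_{i+1}))$ and $W_{OF}(x;H)=1+(x(H)-|V_+(H)|+1)+\sum_{i\in\{2,\ell-1\}\cap[\ell]}(x(E(S_i))-|S_i|+1)$. For each $\xi$, $\mathcal{L}^*_\xi(H)=\min\{\sum_{v\in V_+(H)}w_vy_v:\ y(V_+(H'))\ge k_\xi(V_+(H'))-1\ \forall H'\subseteq H,\ y_v\le b_v\ \forall v\in V_+,\ y\ge0\}$, and $\mathcal{L}^*(H)=\sum_\xi p_\xi\mathcal{L}^*_\xi(H)$. Multipliers $\alpha=(\alpha^\xi_S)_{\xi,\emptyset\ne S\subseteq V_+}$, $\beta=(\beta^\xi_v)$; $\nu(\alpha,\beta)=\sum_\xi\sum_S\alpha^\xi_S(k_\xi(S)-|S|)+\sum_\xi\sum_v\beta^\xi_vb_v$; for $w_v>0$, $\phi_v(\alpha,\beta)=\big(\max_{\xi}\frac{\beta^\xi_v+\sum_{S\ni v}\alpha^\xi_S}{p_\xi w_v}\big)^+$ (where $(a)^+=\max\{a,0\}$). $\mathcal{A}$: set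 of $(\alpha,\beta)$ with $\alpha\ge0$, $\beta\le0$, and $\beta^\xi_v+\sum_{S\ni v}\alpha^\xi_S\le0$ for all $\xi$ and all $v$ with $w_v=0$. $\mathcal{P}$ is the set of $(x,\theta)$ with $x\in\mathcal{X}$ such that there exists $y\in[\mathbf 0,b]^N$ with $y^\xi(S)\ge k_\xi(S)+x(E(S))-|S|$ for all $\emptyset\ne S\subseteq V_+$, $\xi$, and $\theta\ge0$, $\theta_v\ge\sum_\xi p_\xi w_vy^\xi_v$ for all $v$. *)

theory Defs
  imports Main "HOL.Real"
begin

text \<open>Vertices are natural numbers; the depot is 0 and the customers form a finite
  set Vp with 0 not in Vp.\<close>

definition edges :: "nat set \<Rightarrow> nat set set" where
  "edges Vp = {{u, v} | u v. u \<in> insert 0 Vp \<and> v \<in> insert 0 Vp \<and> u \<noteq> v}"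

definition EE :: "nat set \<Rightarrow> nat set \<Rightarrow> nat set set" where
  "EE Vp S = {e \<in> edges Vp. e \<subseteq> S}"

definition EST :: "nat set \<Rightarrow> nat set \<Rightarrow> nat set \<Rightarrow> nat set set" where
  "EST Vp S T = {e \<in> edges Vp. \<exists>u\<in>S. \<exists>v\<in>T. e = {u, v}}"

definition delta :: "nat set \<Rightarrow> nat set \<Rightarrow> nat set set" where
  "delta Vp S = {e \<in> edges Vp. card (e \<inter> S) = 1}"

definition nesubs :: "nat set \<Rightarrow> nat set set" where
  "nesubs Vp = Pow Vp - {{}}"

definition kk :: "real \<Rightarrow> (nat \<Rightarrow> nat \<Rightarrow> real) \<Rightarrow> nat \<Rightarrow> nat set \<Rightarrow> int" where
  "kk C d \<xi> S = \<lceil>(\<Sum>i\<in>S. d \<xi> i) / C\<rceil>"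

definition dbar :: "nat \<Rightarrow> (nat \<Rightarrow> real) \<Rightarrow> (nat \<Rightarrow> nat \<Rightarrow> real) \<Rightarrow> nat set \<Rightarrow> real" where
  "dbar N p d S = (\<Sum>\<xi>\<in>{1..N}. p \<xi> * (\<Sum>i\<in>S. d \<xi> i))"

definition Xsub :: "nat set \<Rightarrow> (nat set \<Rightarrow> real) set" where
  "Xsub Vp = {x. (\<forall>e\<in>edges Vp. 0 \<le> x e \<and> x e \<le> 2)
      \<and> (\<forall>v\<in>Vp. sum x (delta Vp {v}) = 2)
      \<and> (\<forall>S\<in>nesubs Vp. sum x (EE Vp S) \<le> real (card S) - 1)}"

definition Xcvrp :: "nat set \<Rightarrow> nat \<Rightarrow> (nat \<Rightarrow> real) \<Rightarrow> (nat \<Rightarrow> nat \<Rightarrow> real) \<Rightarrow> real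
      \<Rightarrow> nat \<Rightarrow> (nat set \<Rightarrow> real) set" where
  "Xcvrp Vp N p d C k = Xsub Vp \<inter> {x. sum x (delta Vp {0}) = 2 * real k
      \<and> (\<forall>S\<in>nesubs Vp. sum x (EE Vp S) \<le> real (card S) - real_of_int \<lceil>dbar N p d S / C\<rceil>)}"

definition is_route :: "nat set \<Rightarrow> nat list \<Rightarrow> bool" where
  "is_route Vp R \<longleftrightarrow> R \<noteq> [] \<and> distinct R \<and> set R \<subseteq> Vp"

text \<open>Flow condition of Pi(R) for one scenario: R = (v_1,...,v_l) is R!0..R!(l-1);
  f i is the flow on arc (v_i, v_(i+1)) for i = 0..l (with v_0 = v_(l+1) = depot);
  g i is the unloaded quantity at v_i.\<close>
definition route_flow :: "real \<Rightarrow> (nat \<Rightarrow> nat \<Rightarrow> real) \<Rightarrow> nat \<Rightarrow> nat list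
      \<Rightarrow> (nat \<Rightarrow> nat \<Rightarrow> nat) \<Rightarrow> bool" where
  "route_flow C d \<xi> R y \<longleftrightarrow> (\<exists>f g :: nat \<Rightarrow> real.
      (\<forall>i\<le>length R. 0 \<le> f i \<and> f i \<le> C)
    \<and> (\<forall>i\<in>{1..length R}. f (i - 1) + d \<xi> (R ! (i - 1)) = f i + g i
          \<and> 0 \<le> g i \<and> g i \<le> C * real (y \<xi> (R ! (i - 1)))))"

definition PiR :: "real \<Rightarrow> nat \<Rightarrow> (nat \<Rightarrow> nat \<Rightarrow> real) \<Rightarrow> nat list \<Rightarrow> (nat \<Rightarrow> nat \<Rightarrow> nat) set" where
  "PiR C N d R = {y. \<forall>\<xi>\<in>{1..N}. route_flow C d \<xi> R y}"

definition in_box :: "nat set \<Rightarrow> nat \<Rightarrow> (nat \<Rightarrow> nat) \<Rightarrow> (nat \<Rightarrow> nat \<Rightarrow> 'a::linordered_semidom) \<Rightarrow> bool" where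
  "in_box Vp N b y \<longleftrightarrow> (\<forall>\<xi>\<in>{1..N}. \<forall>v\<in>Vp. 0 \<le> y \<xi> v \<and> y \<xi> v \<le> of_nat (b v))"

definition partial_route :: "nat set \<Rightarrow> nat set list \<Rightarrow> bool" where
  "partial_route Vp H \<longleftrightarrow> H \<noteq> []
     \<and> (\<forall>i<length H. H ! i \<noteq> {} \<and> H ! i \<subseteq> Vp)
     \<and> (\<forall>i<length H. \<forall>j<length H. i \<noteq> j \<longrightarrow> H ! i \<inter> H ! j = {})
     \<and> (\<forall>i. Suc i < length H \<longrightarrow> card (H ! i) = 1 \<or> card (H ! Suc i) = 1)"

definition VH :: "nat set list \<Rightarrow> nat set" where
  "VH H = \<Union> (set H)"

text \<open>The sub-partial-route (S_(i+1),...,S_(j+1)) (0-based list indices i..j).\<close>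
definition subroute :: "nat set list \<Rightarrow> nat \<Rightarrow> nat \<Rightarrow> nat set list" where
  "subroute H i j = take (Suc j - i) (drop i H)"

definition xH :: "nat set \<Rightarrow> (nat set \<Rightarrow> real) \<Rightarrow> nat set list \<Rightarrow> real" where
  "xH Vp x H = (\<Sum>i<length H. sum x (EE Vp (H ! i)))
             + (\<Sum>i<length H - 1. sum x (EST Vp (H ! i) (H ! Suc i)))"

text \<open>W_OF(x;H), indices i in {2, l-1} \<inter> [l] are 1-based (S_i = H!(i-1)).\<close>
definition W_OF :: "nat set \<Rightarrow> (nat set \<Rightarrow> real) \<Rightarrow> nat set list \<Rightarrow> real" where
  "W_OF Vp x H = 1 + (xH Vp x H - real (card (VH H)) + 1)
     + (\<Sum>i\<in>{2, length H - 1} \<inter> {1..length H}.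
          sum x (EE Vp (H ! (i - 1))) - real (card (H ! (i - 1))) + 1)"

definition Lstar_xi :: "nat set \<Rightarrow> (nat \<Rightarrow> real) \<Rightarrow> (nat \<Rightarrow> nat) \<Rightarrow> real
     \<Rightarrow> (nat \<Rightarrow> nat \<Rightarrow> real) \<Rightarrow> nat \<Rightarrow> nat set list \<Rightarrow> real" where
  "Lstar_xi Vp w b C d \<xi> H = Inf {(\<Sum>v\<in>VH H. w v * y v) | y :: nat \<Rightarrow> real.
      (\<forall>i j. i \<le> j \<and> j < length H \<longrightarrow>
          sum y (VH (subroute H i j)) \<ge> real_of_int (kk C d \<xi> (VH (subroute H i j))) - 1)
    \<and> (\<forall>v\<in>Vp. 0 \<le> y v \<and> y v \<le> real (b v))}"

definition Lstar :: "nat set \<Rightarrow> nat \<Rightarrow> (nat \<Rightarrow> real) \<Rightarrow> (nat \<Rightarrow> real) \<Rightarrow> (nat \<Rightarrow> nat) \<Rightarrow> real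
     \<Rightarrow> (nat \<Rightarrow> nat \<Rightarrow> real) \<Rightarrow> nat set list \<Rightarrow> real" where
  "Lstar Vp N p w b C d H = (\<Sum>\<xi>\<in>{1..N}. p \<xi> * Lstar_xi Vp w b C d \<xi> H)"

definition colsum :: "nat set \<Rightarrow> (nat \<Rightarrow> nat set \<Rightarrow> real) \<Rightarrow> (nat \<Rightarrow> nat \<Rightarrow> real) \<Rightarrow> nat \<Rightarrow> nat \<Rightarrow> real" where
  "colsum Vp \<alpha> \<beta> \<xi> v = \<beta> \<xi> v + (\<Sum>S\<in>{S\<in>nesubs Vp. v \<in> S}. \<alpha> \<xi> S)"

definition nu :: "nat set \<Rightarrow> nat \<Rightarrow> (nat \<Rightarrow> nat) \<Rightarrow> real \<Rightarrow> (nat \<Rightarrow> nat \<Rightarrow> real)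
     \<Rightarrow> (nat \<Rightarrow> nat set \<Rightarrow> real) \<Rightarrow> (nat \<Rightarrow> nat \<Rightarrow> real) \<Rightarrow> real" where
  "nu Vp N b C d \<alpha> \<beta> =
     (\<Sum>\<xi>\<in>{1..N}. \<Sum>S\<in>nesubs Vp. \<alpha> \<xi> S * (real_of_int (kk C d \<xi> S) - real (card S)))
   + (\<Sum>\<xi>\<in>{1..N}. \<Sum>v\<in>Vp. \<beta> \<xi> v * real (b v))"

definition phi :: "nat set \<Rightarrow> nat \<Rightarrow> (nat \<Rightarrow> real) \<Rightarrow> (nat \<Rightarrow> real)
     \<Rightarrow> (nat \<Rightarrow> nat set \<Rightarrow> real) \<Rightarrow> (nat \<Rightarrow> nat \<Rightarrow> real) \<Rightarrow> nat \<Rightarrow> real" where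
  "phi Vp N p w \<alpha> \<beta> v =
     max 0 (Max ((\<lambda>\<xi>. colsum Vp \<alpha> \<beta> \<xi> v / (p \<xi> * w v)) ` {1..N}))"

definition inA :: "nat set \<Rightarrow> nat \<Rightarrow> (nat \<Rightarrow> real)
     \<Rightarrow> (nat \<Rightarrow> nat set \<Rightarrow> real) \<Rightarrow> (nat \<Rightarrow> nat \<Rightarrow> real) \<Rightarrow> bool" where
  "inA Vp N w \<alpha> \<beta> \<longleftrightarrow>
     (\<forall>\<xi>\<in>{1..N}. \<forall>S\<in>nesubs Vp. 0 \<le> \<alpha> \<xi> S)
   \<and> (\<forall>\<xi>\<in>{1..N}. \<forall>v\<in>Vp. \<beta> \<xi> v \<le> 0)
   \<and> (\<forall>\<xi>\<in>{1..N}. \<forall>v\<in>Vp. w v = 0 \<longrightarrow> colsum Vp \<alpha> \<beta> \<xi> v \<le> 0)"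

definition proj_ineq :: "nat set \<Rightarrow> nat \<Rightarrow> (nat \<Rightarrow> real) \<Rightarrow> (nat \<Rightarrow> real) \<Rightarrow> (nat \<Rightarrow> nat)
     \<Rightarrow> real \<Rightarrow> (nat \<Rightarrow> nat \<Rightarrow> real) \<Rightarrow> (nat \<Rightarrow> nat set \<Rightarrow> real) \<Rightarrow> (nat \<Rightarrow> nat \<Rightarrow> real)
     \<Rightarrow> (nat set \<Rightarrow> real) \<Rightarrow> (nat \<Rightarrow> real) \<Rightarrow> bool" where
  "proj_ineq Vp N p w b C d \<alpha> \<beta> x \<theta> \<longleftrightarrow>
     (\<Sum>v\<in>{v\<in>Vp. w v > 0}. phi Vp N p w \<alpha> \<beta> v * \<theta> v)
       \<ge> (\<Sum>\<xi>\<in>{1..N}. \<Sum>S\<in>nesubs Vp. \<alpha> \<xi> S * sum x (EE Vp S)) + nu Vp N b C d \<alpha> \<beta>"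

definition inP :: "nat set \<Rightarrow> nat \<Rightarrow> (nat \<Rightarrow> real) \<Rightarrow> (nat \<Rightarrow> real) \<Rightarrow> (nat \<Rightarrow> nat)
     \<Rightarrow> real \<Rightarrow> (nat \<Rightarrow> nat \<Rightarrow> real) \<Rightarrow> (nat set \<Rightarrow> real) set
     \<Rightarrow> (nat set \<Rightarrow> real) \<Rightarrow> (nat \<Rightarrow> real) \<Rightarrow> bool" where
  "inP Vp N p w b C d X x \<theta> \<longleftrightarrow> x \<in> X \<and>
     (\<exists>y :: nat \<Rightarrow> nat \<Rightarrow> real. in_box Vp N b y
        \<and> (\<forall>\<xi>\<in>{1..N}. \<forall>S\<in>nesubs Vp.
             sum (y \<xi>) S \<ge> real_of_int (kk C d \<xi> S) + sum x (EE Vp S) - real (card S))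
        \<and> (\<forall>v\<in>Vp. 0 \<le> \<theta> v \<and> \<theta> v \<ge> (\<Sum>\<xi>\<in>{1..N}. p \<xi> * w v * y \<xi> v)))"

end

theory Submission
  imports Defs
begin


inductive nnc :: "(('v \<Rightarrow> real) \<times> real) set \<Rightarrow> ('v \<Rightarrow> real) \<times> real \<Rightarrow> bool" for R where
  nnc_base: "r \<in> R \<Longrightarrow> nnc R r"
| nnc_zero: "nnc R (\<lambda>_. 0, 0)"
| nnc_add: "nnc R (a, c) \<Longrightarrow> nnc R (a', c') \<Longrightarrow> nnc R (\<lambda>q. a q + a' q, c + c')"
| nnc_scale: "nnc R (a, c) \<Longrightarrow> 0 \<le> t \<Longrightarrow> nnc R (\<lambda>q. t * a q, t * c)"

lemma nnc_mono:
  assumes "nnc R' r" "\<And>r. r \<in> R' \<Longrightarrow> nnc R r"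
  shows "nnc R r"
  using assms by (induction rule: nnc.induct) (auto intro: nnc.intros)

lemma farkas:
  assumes "finite V" "finite R" "\<forall>(a,c)\<in>R. \<forall>q. q \<notin> V \<longrightarrow> a q = 0"
    "\<not>(\<exists>x. \<forall>(a,c)\<in>R. (\<Sum>q\<in>V. a q * x q) \<le> c)"
  shows "\<exists>c<0. nnc R (\<lambda>_. 0, c)"
  using assms
proof (induction V arbitrary: R rule: finite_induct)
  case empty
  then obtain a c where ac: "(a,c) \<in> R" "c < 0" by fastforce
  with empty have "a = (\<lambda>_. 0)" by fastforce
  with ac show ?case by (metis nnc_base)
next
  case (insert v V R)
  define Rz where "Rz = {r\<in>R. fst r v = 0}"
  define Rp where "Rp = {r\<in>R. fst r v > 0}"
  define Rn where "Rn = {r\<in>R. fst r v < 0}"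
  define comb where "comb = (\<lambda>(r::('a \<Rightarrow> real) \<times> real, s::('a \<Rightarrow> real) \<times> real).
     (\<lambda>q. (- fst s v) * fst r q + fst r v * fst s q, (- fst s v) * snd r + fst r v * snd s))"
  define R' where "R' = Rz \<union> comb ` (Rp \<times> Rn)"
  have finR': "finite R'" unfolding R'_def Rz_def Rp_def Rn_def using insert.prems(1) by auto
  have van: "\<forall>(a,c)\<in>R'. \<forall>q. q \<notin> V \<longrightarrow> a q = 0"
  proof (intro ballI)
    fix r assume r: "r \<in> R'"
    have "fst r q = 0" if q: "q \<notin> V" for q
    proof (cases "r \<in> Rz")
      case True
      then show ?thesis using insert.prems(2) q unfolding Rz_def by (cases "q = v") fastforce+
    next
      case False
      then obtain r1 s1 where rs: "r1 \<in> Rp" "s1 \<in> Rn" "r = comb (r1, s1)" using r unfolding R'_def by auto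
      have "r1 \<in> R" "s1 \<in> R" using rs unfolding Rp_def Rn_def by auto
      then have "\<forall>q. q \<notin> insert v V \<longrightarrow> fst r1 q = 0" "\<forall>q. q \<notin> insert v V \<longrightarrow> fst s1 q = 0"
        using insert.prems(2) by fastforce+
      then show ?thesis using rs(3) q unfolding comb_def by (cases "q = v") (auto simp: algebra_simps)
    qed
    then show "case r of (a, c) \<Rightarrow> \<forall>q. q \<notin> V \<longrightarrow> a q = 0" by (cases r) auto
  qed
  have infeas: "\<not>(\<exists>x. \<forall>(a,c)\<in>R'. (\<Sum>q\<in>V. a q * x q) \<le> c)"
  proof
    assume "\<exists>x. \<forall>(a,c)\<in>R'. (\<Sum>q\<in>V. a q * x q) \<le> c"
    then obtain x where x: "\<forall>(a,c)\<in>R'. (\<Sum>q\<in>V. a q * x q) \<le> c" by blast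
    define ev where "ev r = (\<Sum>q\<in>V. fst r q * x q)" for r :: "('a \<Rightarrow> real) \<times> real"
    define ub where "ub r = (snd r - ev r) / fst r v" for r :: "('a \<Rightarrow> real) \<times> real"
    have evR': "ev r \<le> snd r" if "r \<in> R'" for r using x that unfolding ev_def by auto
    have lbub: "ub s \<le> ub r" if "r \<in> Rp" "s \<in> Rn" for r s
    proof -
      have "comb (r,s) \<in> R'" using that unfolding R'_def by auto
      then have "ev (comb (r,s)) \<le> snd (comb (r,s))" by (rule evR')
      moreover have "ev (comb (r,s)) = (- fst s v) * ev r + fst r v * ev s"
        unfolding ev_def comb_def by (simp add: sum.distrib sum_distrib_left algebra_simps sum_subtractf sum_negf)
      ultimately have h: "(- fst s v) * ev r + fst r v * ev s \<le> (- fst s v) * snd r + fst r v * snd s"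
        unfolding comb_def by simp
      have pos: "fst r v > 0" "fst s v < 0" using that unfolding Rp_def Rn_def by auto
      have e: "(snd s - ev s) * fst r v - (snd r - ev r) * fst s v = ((- fst s v) * snd r + fst r v * snd s) - ((- fst s v) * ev r + fst r v * ev s)"
        by (simp add: algebra_simps)
      show ?thesis unfolding ub_def using h pos e
        by (simp add: divide_simps)
    qed
    have finRp: "finite Rp" "finite Rn" unfolding Rp_def Rn_def using insert.prems(1) by auto
    define t where "t = (if Rn = {} then (if Rp = {} then 0 else Min (ub ` Rp)) else Max (ub ` Rn))"
    have tub: "t \<le> ub r" if "r \<in> Rp" for r
    proof (cases "Rn = {}")
      case True
      then show ?thesis using that finRp unfolding t_def by auto
    next
      case False
      then have "t \<in> ub ` Rn" unfolding t_def using finRp by auto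
      then obtain s where "s \<in> Rn" "t = ub s" by blast
      then show ?thesis using lbub[OF that] by auto
    qed
    have tlb: "ub s \<le> t" if "s \<in> Rn" for s
      using that finRp unfolding t_def by auto
    have "\<forall>(a,c)\<in>R. (\<Sum>q\<in>insert v V. a q * (x(v:=t)) q) \<le> c"
    proof (intro ballI, clarify)
      fix a c assume ac: "(a,c) \<in> R"
      have "(\<Sum>q\<in>insert v V. a q * (x(v:=t)) q) = a v * t + (\<Sum>q\<in>V. a q * (x(v:=t)) q)"
        using insert.hyps by simp
      also have "(\<Sum>q\<in>V. a q * (x(v:=t)) q) = ev (a,c)"
        unfolding ev_def using insert.hyps by (auto intro: sum.cong)
      finally have eq: "(\<Sum>q\<in>insert v V. a q * (x(v:=t)) q) = a v * t + ev (a,c)" .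
      consider "a v = 0" | "a v > 0" | "a v < 0" by linarith
      then show "(\<Sum>q\<in>insert v V. a q * (x(v:=t)) q) \<le> c"
      proof cases
        case 1
        then have "(a,c) \<in> R'" using ac unfolding R'_def Rz_def by auto
        then show ?thesis using eq 1 evR' by fastforce
      next
        case 2
        then have "t \<le> ub (a,c)" using ac tub unfolding Rp_def by auto
        then show ?thesis using eq 2 unfolding ub_def by (simp add: divide_simps mult.commute)
      next
        case 3
        then have "ub (a,c) \<le> t" using ac tlb unfolding Rn_def by auto
        then show ?thesis using eq 3 unfolding ub_def by (simp add: divide_simps mult.commute)
      qed
    qed
    then show False using insert.prems(3) by blast
  qed
  obtain c where c: "c < 0" "nnc R' (\<lambda>_. 0, c)" using insert.IH[OF finR' van infeas] by blast
  have "nnc R r" if rR': "r \<in> R'" for r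
  proof (cases "r \<in> Rz")
    case True then show ?thesis unfolding Rz_def by (auto intro: nnc_base)
  next
    case False
    then obtain r1 s1 where rs: "r1 \<in> Rp" "s1 \<in> Rn" "r = comb (r1, s1)" using rR' unfolding R'_def by auto
    obtain a1 c1 where r1: "r1 = (a1, c1)" by fastforce
    obtain a2 c2 where s1: "s1 = (a2, c2)" by fastforce
    have "nnc R (a1,c1)" "nnc R (a2,c2)" using rs r1 s1 unfolding Rp_def Rn_def by (auto intro: nnc_base)
    moreover have "0 \<le> - a2 v" "0 \<le> a1 v" using rs r1 s1 unfolding Rp_def Rn_def by auto
    ultimately have "nnc R (\<lambda>q. (- a2 v) * a1 q + a1 v * a2 q, (- a2 v) * c1 + a1 v * c2)"
      by (metis (no_types) nnc_add nnc_scale)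
    then show ?thesis using rs r1 s1 unfolding comb_def by simp
  qed
  then show ?case using c nnc_mono by blast
qed



definition Vs :: "nat set list \<Rightarrow> nat \<Rightarrow> nat \<Rightarrow> nat set" where
  "Vs H i j = (\<Union>a\<in>{i..j}. H!a)"

definition xr :: "nat set \<Rightarrow> (nat set \<Rightarrow> real) \<Rightarrow> nat set list \<Rightarrow> nat \<Rightarrow> nat \<Rightarrow> real" where
  "xr Vp x H i j = (\<Sum>a\<in>{i..j}. sum x (EE Vp (H!a))) + (\<Sum>a\<in>{i..<j}. sum x (EST Vp (H!a) (H!Suc a)))"

lemma subroute_VH:
  assumes "i \<le> j" "j < length H"
  shows "VH (subroute H i j) = Vs H i j"
proof -
  have "set (subroute H i j) = (\<lambda>a. H!a) ` {i..j}"
  proof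
    show "set (subroute H i j) \<subseteq> (\<lambda>a. H!a) ` {i..j}"
    proof
      fix S assume "S \<in> set (subroute H i j)"
      then obtain n where n: "n < length (subroute H i j)" "S = subroute H i j ! n"
        by (metis in_set_conv_nth)
      then have "S = H ! (i + n)" "i + n \<le> j" using assms unfolding subroute_def by auto
      then show "S \<in> (\<lambda>a. H!a) ` {i..j}" by force
    qed
  next
    show "(\<lambda>a. H!a) ` {i..j} \<subseteq> set (subroute H i j)"
    proof
      fix S assume "S \<in> (\<lambda>a. H!a) ` {i..j}"
      then obtain a where a: "a \<in> {i..j}" "S = H!a" by blast
      have "subroute H i j ! (a - i) = H ! a" "a - i < length (subroute H i j)"
        using a assms unfolding subroute_def by auto
      then show "S \<in> set (subroute H i j)" using a by (metis nth_mem)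
    qed
  qed
  then show ?thesis unfolding VH_def Vs_def by auto
qed

lemma edges_finite: "finite Vp \<Longrightarrow> finite (edges Vp)"
proof -
  assume "finite Vp"
  have "edges Vp \<subseteq> Pow (insert 0 Vp)" unfolding edges_def by auto
  then show ?thesis using \<open>finite Vp\<close> by (meson finite_Pow_iff finite_insert finite_subset)
qed

lemma edge_form: "e \<in> edges Vp \<Longrightarrow> \<exists>u v. e = {u,v} \<and> u \<noteq> v"
  unfolding edges_def by auto

lemma EE_sub: "EE Vp S \<subseteq> edges Vp" unfolding EE_def by auto
lemma EST_sub: "EST Vp S T \<subseteq> edges Vp" unfolding EST_def by auto

lemma EE_single: "EE Vp {u} = {}"
  unfolding EE_def by (auto dest!: edge_form)

lemma Xsub_nonneg: "x \<in> Xsub Vp \<Longrightarrow> e \<in> edges Vp \<Longrightarrow> 0 \<le> x e"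
  unfolding Xsub_def by auto

lemma sum_edges_nonneg: "x \<in> Xsub Vp \<Longrightarrow> F \<subseteq> edges Vp \<Longrightarrow> 0 \<le> sum x F"
  by (meson Xsub_nonneg subsetD sum_nonneg)

lemma sum_edges_mono: "finite Vp \<Longrightarrow> x \<in> Xsub Vp \<Longrightarrow> F \<subseteq> G \<Longrightarrow> G \<subseteq> edges Vp \<Longrightarrow> sum x F \<le> sum x G"
  by (rule sum_mono2) (auto intro: Xsub_nonneg dest: edges_finite intro: finite_subset)

lemma E1:
  assumes fin: "finite Vp" and x: "x \<in> Xsub Vp" and AB: "A \<inter> B = {}"
  shows "sum x (EE Vp A) + sum x (EST Vp A B) + sum x (EE Vp B) \<le> sum x (EE Vp (A \<union> B))"
proof -
  have f: "finite (EE Vp A)" "finite (EST Vp A B)" "finite (EE Vp B)"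
    by (rule finite_subset[OF _ edges_finite[OF fin]], rule EE_sub EST_sub)+
  have d1: "EE Vp A \<inter> EST Vp A B = {}" using AB unfolding EE_def EST_def by auto
  have d2: "(EE Vp A \<union> EST Vp A B) \<inter> EE Vp B = {}"
    using AB unfolding EE_def EST_def by (auto dest!: edge_form)
  have "sum x (EE Vp A) + sum x (EST Vp A B) + sum x (EE Vp B) = sum x (EE Vp A \<union> EST Vp A B \<union> EE Vp B)"
    using f d1 d2 by (simp add: sum.union_disjoint)
  also have "\<dots> \<le> sum x (EE Vp (A \<union> B))"
    by (rule sum_edges_mono[OF fin x]) (auto simp: EE_def EST_def)
  finally show ?thesis .
qed

lemma EST_mono_sum:
  assumes fin: "finite Vp" and x: "x \<in> Xsub Vp" and "A \<subseteq> A'"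
  shows "sum x (EST Vp A B) \<le> sum x (EST Vp A' B)"
  by (rule sum_edges_mono[OF fin x]) (use assms in \<open>auto simp: EST_def\<close>)

lemma pr_disj:
  assumes "partial_route Vp H" "a < length H" "c < length H" "a \<noteq> c"
  shows "H!a \<inter> H!c = {}"
  using assms unfolding partial_route_def by blast

lemma pr_sub: "partial_route Vp H \<Longrightarrow> a < length H \<Longrightarrow> H!a \<subseteq> Vp"
  unfolding partial_route_def by blast

lemma pr_ne: "partial_route Vp H \<Longrightarrow> a < length H \<Longrightarrow> H!a \<noteq> {}"
  unfolding partial_route_def by blast

lemma Vs_sub: "partial_route Vp H \<Longrightarrow> j < length H \<Longrightarrow> Vs H i j \<subseteq> Vp"
  unfolding Vs_def by (intro UN_least) (metis atLeastAtMost_iff le_less_trans pr_sub)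

lemma Vs_ne: "partial_route Vp H \<Longrightarrow> i \<le> j \<Longrightarrow> j < length H \<Longrightarrow> Vs H i j \<noteq> {}"
  unfolding Vs_def using pr_ne by fastforce

lemma Vs_fin: "finite Vp \<Longrightarrow> partial_route Vp H \<Longrightarrow> j < length H \<Longrightarrow> finite (Vs H i j)"
  by (rule finite_subset[OF Vs_sub])

lemma Vs_nesubs: "partial_route Vp H \<Longrightarrow> i \<le> j \<Longrightarrow> j < length H \<Longrightarrow> Vs H i j \<in> nesubs Vp"
  unfolding nesubs_def using Vs_sub Vs_ne by blast

lemma Vs_Suc: "i \<le> Suc j \<Longrightarrow> Vs H i (Suc j) = Vs H i j \<union> H ! Suc j"
proof -
  assume "i \<le> Suc j"
  then have "{i..Suc j} = insert (Suc j) {i..j}" by auto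
  then show ?thesis unfolding Vs_def by auto
qed

lemma Vs_Suc_left: "i \<le> j \<Longrightarrow> Vs H i j = H ! i \<union> Vs H (Suc i) j"
proof -
  assume "i \<le> j"
  then have "{i..j} = insert i {Suc i..j}" by auto
  then show ?thesis unfolding Vs_def by auto
qed

lemma Vs_same: "Vs H i i = H ! i" unfolding Vs_def by auto

lemma Vs_disj:
  assumes "partial_route Vp H" "j < length H" "c < length H" "c \<notin> {i..j}"
  shows "Vs H i j \<inter> H!c = {}"
proof -
  have "H!a \<inter> H!c = {}" if "a \<in> {i..j}" for a
    using pr_disj[OF assms(1), of a c] assms that by auto
  then show ?thesis unfolding Vs_def by blast
qed

lemma card_Vs:
  assumes "finite Vp" "partial_route Vp H" "j < length H"
  shows "card (Vs H i j) = (\<Sum>a\<in>{i..j}. card (H!a))"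
  unfolding Vs_def
proof (rule card_UN_disjoint)
  show "finite {i..j}" by simp
  show "\<forall>a\<in>{i..j}. finite (H ! a)"
  proof
    fix a assume "a \<in> {i..j}"
    then have "a < length H" using assms by auto
    then have "H ! a \<subseteq> Vp" using pr_sub assms(2) by blast
    then show "finite (H ! a)" using assms(1) by (rule finite_subset)
  qed
  show "\<forall>a\<in>{i..j}. \<forall>c\<in>{i..j}. a \<noteq> c \<longrightarrow> H ! a \<inter> H ! c = {}"
  proof (intro ballI impI)
    fix a c assume "a \<in> {i..j}" "c \<in> {i..j}" "a \<noteq> c"
    then show "H ! a \<inter> H ! c = {}" using pr_disj[OF assms(2), of a c] assms(3) by auto
  qed
qed

lemma xr_same: "xr Vp x H i i = sum x (EE Vp (H!i))"
  unfolding xr_def by simp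

lemma xr_Suc: "i \<le> j \<Longrightarrow> xr Vp x H i (Suc j) = xr Vp x H i j + sum x (EST Vp (H!j) (H!Suc j)) + sum x (EE Vp (H!Suc j))"
  unfolding xr_def by (simp add: add.commute add.left_commute)

lemma xr_split:
  assumes "i \<le> m" "m < j"
  shows "xr Vp x H i j = xr Vp x H i m + sum x (EST Vp (H!m) (H!Suc m)) + xr Vp x H (Suc m) j"
proof -
  have a: "(\<Sum>a\<in>{i..j}. f a) = (\<Sum>a\<in>{i..m}. f a) + (\<Sum>a\<in>{Suc m..j}. f a)" for f :: "nat \<Rightarrow> real"
  proof -
    have "{i..j} = {i..m} \<union> {Suc m..j}" using assms by auto
    then show ?thesis by (simp add: sum.union_disjoint)
  qed
  have b: "(\<Sum>a\<in>{i..<j}. f a) = (\<Sum>a\<in>{i..<m}. f a) + f m + (\<Sum>a\<in>{Suc m..<j}. f a)" for f :: "nat \<Rightarrow> real"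
  proof -
    have "{i..<j} = {i..<m} \<union> {m} \<union> {Suc m..<j}" using assms by auto
    then show ?thesis by (simp add: sum.union_disjoint)
  qed
  show ?thesis unfolding xr_def a[of "\<lambda>a. sum x (EE Vp (H!a))"] b[of "\<lambda>a. sum x (EST Vp (H!a) (H!Suc a))"]
    by (simp only: add.assoc)
qed

lemma xH_xr: "H \<noteq> [] \<Longrightarrow> xH Vp x H = xr Vp x H 0 (length H - 1)"
proof -
  assume "H \<noteq> []"
  then obtain m where m: "length H = Suc m" by (cases H) auto
  have "{..<length H} = {0..length H - 1}" "{..<length H - 1} = {0..<length H - 1}" unfolding m by auto
  then show ?thesis unfolding xH_def xr_def by simp
qed

lemma VH_Vs: "H \<noteq> [] \<Longrightarrow> VH H = Vs H 0 (length H - 1)"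
proof -
  assume "H \<noteq> []"
  then have e: "{0..length H - 1} = {..<length H}" by (cases H) auto
  have "set H = (\<lambda>a. H!a) ` {..<length H}" by (auto simp: set_conv_nth)
  then show ?thesis unfolding VH_def Vs_def e by simp
qed

lemma E3:
  assumes fin: "finite Vp" and x: "x \<in> Xsub Vp" and H: "partial_route Vp H"
    and ij: "i \<le> j" "j < length H"
  shows "xr Vp x H i j \<le> sum x (EE Vp (Vs H i j))"
  using ij
proof (induction j rule: dec_induct)
  case base
  then show ?case by (simp add: xr_same Vs_same)
next
  case (step j)
  have "xr Vp x H i (Suc j) = xr Vp x H i j + sum x (EST Vp (H!j) (H!Suc j)) + sum x (EE Vp (H!Suc j))"
    using step by (simp add: xr_Suc)
  also have "\<dots> \<le> sum x (EE Vp (Vs H i j)) + sum x (EST Vp (Vs H i j) (H!Suc j)) + sum x (EE Vp (H!Suc j))"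
  proof -
    have "H!j \<subseteq> Vs H i j" using step unfolding Vs_def by auto
    then have "sum x (EST Vp (H!j) (H!Suc j)) \<le> sum x (EST Vp (Vs H i j) (H!Suc j))"
      by (rule EST_mono_sum[OF fin x])
    then show ?thesis using step by simp
  qed
  also have "\<dots> \<le> sum x (EE Vp (Vs H i j \<union> H!Suc j))"
    by (rule E1[OF fin x]) (rule Vs_disj[OF H], use step in auto)
  also have "Vs H i j \<union> H!Suc j = Vs H i (Suc j)" using step by (simp add: Vs_Suc)
  finally show ?case .
qed

lemma Vs_split: "a \<le> m \<Longrightarrow> m < c \<Longrightarrow> Vs H a c = Vs H a m \<union> Vs H (Suc m) c"
proof -
  assume "a \<le> m" "m < c"
  then have "{a..c} = {a..m} \<union> {Suc m..c}" by auto
  then show ?thesis unfolding Vs_def by auto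
qed

lemma card_Vs_split:
  assumes fin: "finite Vp" and H: "partial_route Vp H" and "a \<le> m" "m < c" "c < length H"
  shows "card (Vs H a c) = card (Vs H a m) + card (Vs H (Suc m) c)"
proof -
  have "card (Vs H a c) = (\<Sum>i\<in>{a..c}. card (H!i))" by (rule card_Vs) (use assms in auto)
  also have "{a..c} = {a..m} \<union> {Suc m..c}" using assms by auto
  also have "(\<Sum>i\<in>{a..m} \<union> {Suc m..c}. card (H!i)) = (\<Sum>i\<in>{a..m}. card (H!i)) + (\<Sum>i\<in>{Suc m..c}. card (H!i))"
    by (rule sum.union_disjoint) auto
  also have "(\<Sum>i\<in>{a..m}. card (H!i)) = card (Vs H a m)" by (rule card_Vs[symmetric]) (use assms in auto)
  also have "(\<Sum>i\<in>{Suc m..c}. card (H!i)) = card (Vs H (Suc m) c)" by (rule card_Vs[symmetric]) (use assms in auto)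
  finally show ?thesis .
qed

lemma X3: "x \<in> Xsub Vp \<Longrightarrow> S \<in> nesubs Vp \<Longrightarrow> sum x (EE Vp S) \<le> real (card S) - 1"
  unfolding Xsub_def by auto

lemma X2: "x \<in> Xsub Vp \<Longrightarrow> v \<in> Vp \<Longrightarrow> sum x (delta Vp {v}) = 2"
  unfolding Xsub_def by auto

lemma Vs_X3:
  assumes "x \<in> Xsub Vp" "partial_route Vp H" "i \<le> j" "j < length H"
  shows "sum x (EE Vp (Vs H i j)) \<le> real (card (Vs H i j)) - 1"
  using X3 Vs_nesubs assms by blast

lemma E7:
  assumes fin: "finite Vp" and x: "x \<in> Xsub Vp" and u: "u \<in> Vp" "u \<notin> T" "u \<notin> T'" and TT: "T \<inter> T' = {}"
  shows "sum x (EST Vp T {u}) + sum x (EST Vp {u} T') \<le> 2"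
proof -
  have f: "finite (EST Vp T {u})" "finite (EST Vp {u} T')"
    by (rule finite_subset[OF EST_sub edges_finite[OF fin]])+
  have d: "EST Vp T {u} \<inter> EST Vp {u} T' = {}"
  proof (rule ccontr)
    assume "EST Vp T {u} \<inter> EST Vp {u} T' \<noteq> {}"
    then obtain a a' where "a \<in> T" "a' \<in> T'" "{a,u} = {u,a'}" unfolding EST_def by auto
    then show False using u TT by (metis doubleton_eq_iff disjoint_iff)
  qed
  have "sum x (EST Vp T {u}) + sum x (EST Vp {u} T') = sum x (EST Vp T {u} \<union> EST Vp {u} T')"
    using f d by (simp add: sum.union_disjoint)
  also have "\<dots> \<le> sum x (delta Vp {u})"
  proof (rule sum_edges_mono[OF fin x])
    show "delta Vp {u} \<subseteq> edges Vp" unfolding delta_def by auto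
    show "EST Vp T {u} \<union> EST Vp {u} T' \<subseteq> delta Vp {u}"
    proof
      fix e assume e: "e \<in> EST Vp T {u} \<union> EST Vp {u} T'"
      then obtain a where a: "e = {a,u}" "a \<noteq> u" "e \<in> edges Vp"
        unfolding EST_def using u by (auto simp: insert_commute)
      then have "e \<inter> {u} = {u}" by auto
      then show "e \<in> delta Vp {u}" unfolding delta_def using a by auto
    qed
  qed
  also have "\<dots> = 2" using X2[OF x u(1)] .
  finally show ?thesis .
qed

definition extra :: "nat set \<Rightarrow> (nat set \<Rightarrow> real) \<Rightarrow> nat set list \<Rightarrow> nat \<Rightarrow> real" where
  "extra Vp x H a = real (card (H!a)) - 1 - sum x (EE Vp (H!a))"

lemma extra_nonneg: "x \<in> Xsub Vp \<Longrightarrow> partial_route Vp H \<Longrightarrow> a < length H \<Longrightarrow> 0 \<le> extra Vp x H a"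
  unfolding extra_def using Vs_X3[of x Vp H a a] by (simp add: Vs_same)

lemma extra_single: "card (H!a) = 1 \<Longrightarrow> extra Vp x H a = 0"
  unfolding extra_def by (auto simp: card_Suc_eq EE_single)

lemma prefix_bound:
  assumes fin: "finite Vp" and x: "x \<in> Xsub Vp" and H: "partial_route Vp H"
    and i: "1 \<le> i" "i < length H"
  shows "xr Vp x H 0 (i-1) + sum x (EST Vp (H!(i-1)) (H!i))
           \<le> real (card (Vs H 0 (i-1))) + (if i = 1 then extra Vp x H 1 else 0)"
proof -
  have alt: "card (H!(i-1)) = 1 \<or> card (H!i) = 1"
    using H i unfolding partial_route_def by (metis Suc_diff_1 less_le_trans zero_less_one)
  show ?thesis
  proof (cases "card (H!i) = 1 \<or> i = 1")
    case True
    have "xr Vp x H 0 i = xr Vp x H 0 (i-1) + sum x (EST Vp (H!(i-1)) (H!i)) + sum x (EE Vp (H!i))"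
      using xr_Suc[of 0 "i-1" Vp x H] i by simp
    moreover have "xr Vp x H 0 i \<le> sum x (EE Vp (Vs H 0 i))" by (rule E3) (use assms in auto)
    moreover have "sum x (EE Vp (Vs H 0 i)) \<le> real (card (Vs H 0 i)) - 1" by (rule Vs_X3) (use assms in auto)
    moreover have "card (Vs H 0 i) = card (Vs H 0 (i-1)) + card (Vs H i i)"
      using card_Vs_split[OF fin H, of 0 "i-1" i] i by simp
    moreover have "extra Vp x H i \<le> (if i = 1 then extra Vp x H 1 else 0)"
      using True extra_single by auto
    ultimately show ?thesis unfolding extra_def Vs_same by simp
  next
    case False
    then have c1: "card (H!(i-1)) = 1" "i \<ge> 2" using alt i by auto
    then obtain u where u: "H!(i-1) = {u}" by (auto simp: card_Suc_eq)
    have "xr Vp x H 0 (i-1) = xr Vp x H 0 (i-2) + sum x (EST Vp (H!(i-2)) (H!(i-1))) + sum x (EE Vp (H!(i-1)))"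
      using xr_Suc[of 0 "i-2" Vp x H] c1 by (simp add: Suc_diff_Suc numeral_2_eq_2)
    then have e1: "xr Vp x H 0 (i-1) = xr Vp x H 0 (i-2) + sum x (EST Vp (H!(i-2)) {u})"
      using u by (simp add: EE_single)
    have "i - 2 < length H" using i by simp
    then have e2: "xr Vp x H 0 (i-2) \<le> real (card (Vs H 0 (i-2))) - 1"
      using E3[OF fin x H, of 0 "i-2"] Vs_X3[OF x H, of 0 "i-2"] by simp
    have e3: "card (Vs H 0 (i-1)) = card (Vs H 0 (i-2)) + 1"
      using card_Vs_split[OF fin H, of 0 "i-2" "i-1"] c1 i u
      by (simp add: Suc_diff_Suc numeral_2_eq_2 Vs_same)
    have uV: "u \<in> Vp" using pr_sub[OF H, of "i-1"] u i by auto
    have "u \<notin> H!(i-2)" using pr_disj[OF H, of "i-1" "i-2"] u i c1 by auto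
    moreover have "u \<notin> H!i" using pr_disj[OF H, of "i-1" "i"] u i c1 by auto
    moreover have "H!(i-2) \<inter> H!i = {}" using pr_disj[OF H, of "i-2" "i"] i c1 by auto
    ultimately have e4: "sum x (EST Vp (H!(i-2)) {u}) + sum x (EST Vp {u} (H!i)) \<le> 2"
      using E7[OF fin x uV] by blast
    show ?thesis using e1 e2 e3 e4 u c1 by simp
  qed
qed

lemma suffix_bound:
  assumes fin: "finite Vp" and x: "x \<in> Xsub Vp" and H: "partial_route Vp H"
    and j: "Suc j < length H"
  shows "sum x (EST Vp (H!j) (H!Suc j)) + xr Vp x H (Suc j) (length H - 1)
           \<le> real (card (Vs H (Suc j) (length H - 1))) + (if j = length H - 2 then extra Vp x H j else 0)"
proof -
  have alt: "card (H!j) = 1 \<or> card (H!Suc j) = 1"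
    using H j unfolding partial_route_def by blast
  show ?thesis
  proof (cases "card (H!j) = 1 \<or> j = length H - 2")
    case True
    have "xr Vp x H j (length H - 1) = xr Vp x H j j + sum x (EST Vp (H!j) (H!Suc j)) + xr Vp x H (Suc j) (length H - 1)"
      by (rule xr_split) (use j in auto)
    moreover have "xr Vp x H j (length H - 1) \<le> sum x (EE Vp (Vs H j (length H - 1)))" by (rule E3) (use assms in auto)
    moreover have "sum x (EE Vp (Vs H j (length H - 1))) \<le> real (card (Vs H j (length H - 1))) - 1" by (rule Vs_X3) (use assms in auto)
    moreover have "card (Vs H j (length H - 1)) = card (Vs H j j) + card (Vs H (Suc j) (length H - 1))"
      using card_Vs_split[OF fin H, of j j "length H - 1"] j by simp
    moreover have "extra Vp x H j \<le> (if j = length H - 2 then extra Vp x H j else 0)"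
      using True extra_single by auto
    ultimately show ?thesis unfolding extra_def Vs_same xr_same by simp
  next
    case False
    then have c1: "card (H!Suc j) = 1" "Suc (Suc j) < length H" using alt j by auto
    then obtain u where u: "H!Suc j = {u}" by (auto simp: card_Suc_eq)
    have "xr Vp x H (Suc j) (length H - 1) = xr Vp x H (Suc j) (Suc j) + sum x (EST Vp (H!Suc j) (H!Suc (Suc j))) + xr Vp x H (Suc (Suc j)) (length H - 1)"
      by (rule xr_split) (use c1 in auto)
    then have e1: "xr Vp x H (Suc j) (length H - 1) = sum x (EST Vp {u} (H!Suc (Suc j))) + xr Vp x H (Suc (Suc j)) (length H - 1)"
      using u by (simp add: EE_single xr_same)
    have e2: "xr Vp x H (Suc (Suc j)) (length H - 1) \<le> real (card (Vs H (Suc (Suc j)) (length H - 1))) - 1"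
    proof -
      have h: "Suc (Suc j) \<le> length H - 1" "length H - 1 < length H" using c1 by auto
      show ?thesis using E3[OF fin x H h] Vs_X3[OF x H h] by simp
    qed
    have e3: "card (Vs H (Suc j) (length H - 1)) = 1 + card (Vs H (Suc (Suc j)) (length H - 1))"
      using card_Vs_split[OF fin H, of "Suc j" "Suc j" "length H - 1"] c1 u
      by (simp add: Vs_same)
    have uV: "u \<in> Vp" using pr_sub[OF H, of "Suc j"] u j by auto
    have "u \<notin> H!j" using pr_disj[OF H, of "Suc j" j] u j by auto
    moreover have "u \<notin> H!Suc (Suc j)" using pr_disj[OF H, of "Suc j" "Suc (Suc j)"] u c1 by auto
    moreover have "H!j \<inter> H!Suc (Suc j) = {}" using pr_disj[OF H, of j "Suc (Suc j)"] c1 by auto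
    ultimately have e4: "sum x (EST Vp (H!j) {u}) + sum x (EST Vp {u} (H!Suc (Suc j))) \<le> 2"
      using E7[OF fin x uV] by blast
    show ?thesis using e1 e2 e3 e4 u c1 False by simp
  qed
qed


definition ext :: "nat set \<Rightarrow> (nat set \<Rightarrow> real) \<Rightarrow> nat set list \<Rightarrow> real" where
  "ext Vp x H = (\<Sum>i\<in>{2, length H - 1} \<inter> {1..length H}. extra Vp x H (i-1))"

definition sigma :: "nat set \<Rightarrow> (nat set \<Rightarrow> real) \<Rightarrow> nat set list \<Rightarrow> real" where
  "sigma Vp x H = real (card (VH H)) - 1 - xH Vp x H + ext Vp x H"

lemma W_sigma: "W_OF Vp x H = 1 - sigma Vp x H"
proof -
  have "(\<Sum>i\<in>{2, length H - 1} \<inter> {1..length H}. sum x (EE Vp (H ! (i - 1))) - real (card (H ! (i - 1))) + 1)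
      = (\<Sum>i\<in>{2, length H - 1} \<inter> {1..length H}. - extra Vp x H (i-1))"
    by (rule sum.cong) (auto simp: extra_def)
  also have "\<dots> = - ext Vp x H" unfolding ext_def by (simp add: sum_negf)
  finally show ?thesis unfolding W_OF_def sigma_def by simp
qed

lemma ext_nonneg:
  assumes "x \<in> Xsub Vp" "partial_route Vp H"
  shows "0 \<le> ext Vp x H"
  unfolding ext_def by (rule sum_nonneg) (use assms extra_nonneg in auto)

lemma ext_ge:
  assumes x: "x \<in> Xsub Vp" and H: "partial_route Vp H" and F: "F \<subseteq> {2, length H - 1} \<inter> {1..length H}"
  shows "(\<Sum>i\<in>F. extra Vp x H (i-1)) \<le> ext Vp x H"
  unfolding ext_def by (rule sum_mono2) (use assms extra_nonneg in auto)

lemma ext1: "x \<in> Xsub Vp \<Longrightarrow> partial_route Vp H \<Longrightarrow> 2 \<le> length H \<Longrightarrow> extra Vp x H 1 \<le> ext Vp x H"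
  using ext_ge[of x Vp H "{2}"] by simp

lemma ext2: "x \<in> Xsub Vp \<Longrightarrow> partial_route Vp H \<Longrightarrow> 2 \<le> length H \<Longrightarrow> extra Vp x H (length H - 2) \<le> ext Vp x H"
  using ext_ge[of x Vp H "{length H - 1}"] by (simp add: numeral_2_eq_2)

lemma ext12: "x \<in> Xsub Vp \<Longrightarrow> partial_route Vp H \<Longrightarrow> 2 \<le> length H \<Longrightarrow> length H \<noteq> 3 \<Longrightarrow>
    extra Vp x H 1 + extra Vp x H (length H - 2) \<le> ext Vp x H"
  using ext_ge[of x Vp H "{2, length H - 1}"] by (simp add: numeral_2_eq_2 numeral_3_eq_3)

lemma sigma_ge_ext:
  assumes fin: "finite Vp" and x: "x \<in> Xsub Vp" and H: "partial_route Vp H"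
  shows "ext Vp x H \<le> sigma Vp x H"
proof -
  have ne: "H \<noteq> []" using H unfolding partial_route_def by auto
  have "xH Vp x H \<le> sum x (EE Vp (VH H))"
    using E3[OF fin x H, of 0 "length H - 1"] ne by (simp add: xH_xr VH_Vs)
  also have "\<dots> \<le> real (card (VH H)) - 1"
    using Vs_X3[OF x H, of 0 "length H - 1"] ne by (simp add: VH_Vs)
  finally show ?thesis unfolding sigma_def by simp
qed

lemma sigma_nonneg: "finite Vp \<Longrightarrow> x \<in> Xsub Vp \<Longrightarrow> partial_route Vp H \<Longrightarrow> 0 \<le> sigma Vp x H"
  using sigma_ge_ext ext_nonneg by (meson order_trans)

lemma s_le_sigma:
  assumes fin: "finite Vp" and x: "x \<in> Xsub Vp" and H: "partial_route Vp H"
    and ij: "i \<le> j" "j < length H"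
  shows "real (card (Vs H i j)) - 1 - sum x (EE Vp (Vs H i j)) \<le> sigma Vp x H"
proof -
  define L where "L = length H - 1"
  have ne: "H \<noteq> []" using H unfolding partial_route_def by auto
  have jL: "j \<le> L" using ij unfolding L_def by auto
  define P where "P = (if i = 0 then 0 else xr Vp x H 0 (i-1) + sum x (EST Vp (H!(i-1)) (H!i)))"
  define Q where "Q = (if j = L then 0 else sum x (EST Vp (H!j) (H!Suc j)) + xr Vp x H (Suc j) L)"
  define cA where "cA = (if i = 0 then 0 else card (Vs H 0 (i-1)))"
  define cB where "cB = (if j = L then 0 else card (Vs H (Suc j) L))"
  define eP where "eP = (if i = 1 then extra Vp x H 1 else 0)"
  define eQ where "eQ = (if j \<noteq> L \<and> j = length H - 2 then extra Vp x H j else 0)"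
  have xiL: "xr Vp x H i L = xr Vp x H i j + Q"
  proof (cases "j = L")
    case False
    then show ?thesis unfolding Q_def using xr_split[of i j L Vp x H] ij jL by simp
  qed (simp add: Q_def)
  have x0L: "xr Vp x H 0 L = P + xr Vp x H i L"
  proof (cases "i = 0")
    case False
    then show ?thesis unfolding P_def using xr_split[of 0 "i-1" L Vp x H] ij jL by simp
  qed (simp add: P_def)
  have ciL: "card (Vs H i L) = card (Vs H i j) + cB"
  proof (cases "j = L")
    case False
    then show ?thesis unfolding cB_def using card_Vs_split[OF fin H, of i j L] ij jL L_def ne by simp
  qed (simp add: cB_def)
  have c0L: "card (Vs H 0 L) = cA + card (Vs H i L)"
  proof (cases "i = 0")
    case False
    then show ?thesis unfolding cA_def using card_Vs_split[OF fin H, of 0 "i-1" L] ij jL L_def ne by simp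
  qed (simp add: cA_def)
  have PB: "P \<le> real cA + eP"
  proof (cases "i = 0")
    case False
    then show ?thesis unfolding P_def cA_def eP_def using prefix_bound[OF fin x H, of i] ij by simp
  qed (simp add: P_def cA_def eP_def)
  have QB: "Q \<le> real cB + eQ"
  proof (cases "j = L")
    case False
    then show ?thesis unfolding Q_def cB_def eQ_def L_def using suffix_bound[OF fin x H, of j] ij jL L_def
      by (simp add: eQ_def)
  qed (simp add: Q_def cB_def eQ_def)
  have sub: "xr Vp x H i j \<le> sum x (EE Vp (Vs H i j))" by (rule E3[OF fin x H ij])
  have xHe: "xH Vp x H = P + xr Vp x H i j + Q" using xH_xr[OF ne] x0L xiL unfolding L_def by simp
  have cVH: "card (VH H) = cA + card (Vs H i j) + cB" using VH_Vs[OF ne] c0L ciL unfolding L_def by simp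
  have l2: "2 \<le> length H" if "i = 1" using that ij by auto
  have l2': "2 \<le> length H" if "j \<noteq> L" "j = length H - 2" using that ij L_def by auto
  show ?thesis
  proof (cases "i = 1 \<and> j = 1 \<and> length H = 3")
    case True
    then have "real (card (Vs H i j)) - 1 - sum x (EE Vp (Vs H i j)) = extra Vp x H 1"
      unfolding extra_def by (simp add: Vs_same)
    also have "\<dots> \<le> ext Vp x H" using ext1[OF x H] True by simp
    also have "\<dots> \<le> sigma Vp x H" by (rule sigma_ge_ext[OF fin x H])
    finally show ?thesis .
  next
    case False
    have "eP + eQ \<le> ext Vp x H"
    proof (cases "i = 1")
      case True
      note iT = True
      show ?thesis
      proof (cases "j \<noteq> L \<and> j = length H - 2")
        case True
        then have "length H \<noteq> 3" using False iT ij L_def by auto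
        then show ?thesis using ext12[OF x H] l2 iT True unfolding eP_def eQ_def by simp
      next
        case False
        then have "eQ = 0" unfolding eQ_def by auto
        then show ?thesis using ext1[OF x H] l2 iT unfolding eP_def by simp
      qed
    next
      case iF: False
      show ?thesis
      proof (cases "j \<noteq> L \<and> j = length H - 2")
        case True
        then show ?thesis using ext2[OF x H] l2' iF unfolding eP_def eQ_def by simp
      next
        case False
        then have "eQ = 0" unfolding eQ_def by auto
        then show ?thesis using ext_nonneg[OF x H] iF unfolding eP_def by simp
      qed
    qed
    then show ?thesis using PB QB sub xHe cVH unfolding sigma_def by simp
  qed
qed



lemma VH_sub: "partial_route Vp H \<Longrightarrow> VH H \<subseteq> Vp"
proof -
  assume H: "partial_route Vp H"
  have "S \<subseteq> Vp" if "S \<in> set H" for S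
  proof -
    obtain i where "i < length H" "S = H ! i" using \<open>S \<in> set H\<close> by (auto simp: in_set_conv_nth)
    then show ?thesis using pr_sub[OF H] by blast
  qed
  then show ?thesis unfolding VH_def by blast
qed

lemma VH_fin: "finite Vp \<Longrightarrow> partial_route Vp H \<Longrightarrow> finite (VH H)"
  using VH_sub finite_subset by blast

definition lpfeas :: "nat set \<Rightarrow> (nat \<Rightarrow> nat) \<Rightarrow> real \<Rightarrow> (nat \<Rightarrow> nat \<Rightarrow> real) \<Rightarrow> nat \<Rightarrow> nat set list \<Rightarrow> (nat \<Rightarrow> real) \<Rightarrow> bool" where
  "lpfeas Vp b C d \<xi> H y \<longleftrightarrow> (\<forall>i j. i \<le> j \<and> j < length H \<longrightarrow>
          sum y (VH (subroute H i j)) \<ge> real_of_int (kk C d \<xi> (VH (subroute H i j))) - 1)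
    \<and> (\<forall>v\<in>Vp. 0 \<le> y v \<and> y v \<le> real (b v))"

lemma Lstar_xi_alt: "Lstar_xi Vp w b C d \<xi> H = Inf {(\<Sum>v\<in>VH H. w v * y v) | y. lpfeas Vp b C d \<xi> H y}"
  unfolding Lstar_xi_def lpfeas_def by simp

lemma Lstar_le:
  assumes H: "partial_route Vp H" and w: "\<forall>v\<in>Vp. 0 \<le> w v" and y: "lpfeas Vp b C d \<xi> H y"
  shows "Lstar_xi Vp w b C d \<xi> H \<le> (\<Sum>v\<in>VH H. w v * y v)"
  unfolding Lstar_xi_alt
proof (rule cInf_lower)
  show "(\<Sum>v\<in>VH H. w v * y v) \<in> {(\<Sum>v\<in>VH H. w v * y v) | y. lpfeas Vp b C d \<xi> H y}" using y by blast
  show "bdd_below {(\<Sum>v\<in>VH H. w v * y v) | y. lpfeas Vp b C d \<xi> H y}"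
  proof (rule bdd_belowI)
    fix r assume "r \<in> {(\<Sum>v\<in>VH H. w v * y v) | y. lpfeas Vp b C d \<xi> H y}"
    then obtain y' where "r = (\<Sum>v\<in>VH H. w v * y' v)" "lpfeas Vp b C d \<xi> H y'" by blast
    then show "0 \<le> r" using VH_sub[OF H] w unfolding lpfeas_def
      by (auto intro!: sum_nonneg mult_nonneg_nonneg)
  qed
qed

lemma Lstar_ge0:
  assumes H: "partial_route Vp H" and w: "\<forall>v\<in>Vp. 0 \<le> w v" and y: "lpfeas Vp b C d \<xi> H y"
  shows "0 \<le> Lstar_xi Vp w b C d \<xi> H"
  unfolding Lstar_xi_alt
proof (rule cInf_greatest)
  show "{(\<Sum>v\<in>VH H. w v * y v) | y. lpfeas Vp b C d \<xi> H y} \<noteq> {}" using y by blast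
  fix r assume "r \<in> {(\<Sum>v\<in>VH H. w v * y v) | y. lpfeas Vp b C d \<xi> H y}"
  then obtain y' where "r = (\<Sum>v\<in>VH H. w v * y' v)" "lpfeas Vp b C d \<xi> H y'" by blast
  then show "0 \<le> r" using VH_sub[OF H] w unfolding lpfeas_def
    by (auto intro!: sum_nonneg mult_nonneg_nonneg)
qed

lemma sum_nth_set:
  fixes h :: "nat \<Rightarrow> real"
  assumes "distinct R"
  shows "(\<Sum>k<length R. h (R!k)) = sum h (set R)"
proof -
  have "sum h (set R) = sum_list (map h R)" using assms by (rule sum.distinct_set_conv_list)
  also have "\<dots> = (\<Sum>k = 0..<length (map h R). map h R ! k)" by (rule sum_list_sum_nth)
  also have "\<dots> = (\<Sum>k<length R. h (R!k))" by (simp add: atLeast0LessThan)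
  finally show ?thesis by simp
qed

lemma route_bound:
  assumes Cpos: "C > 0" and routes: "\<forall>R. is_route Vp R \<longrightarrow> (\<exists>y\<in>PiR C N d R. in_box Vp N b y)"
    and xi: "\<xi> \<in> {1..N}" and S: "S \<noteq> {}" "S \<subseteq> Vp" "finite S"
  shows "real_of_int (kk C d \<xi> S) - 1 \<le> real (\<Sum>v\<in>S. b v)"
proof -
  define R where "R = sorted_list_of_set S"
  have R: "set R = S" "distinct R" using S unfolding R_def by auto
  then have "is_route Vp R" unfolding is_route_def using S by auto
  then obtain y where y: "y \<in> PiR C N d R" "in_box Vp N b y" using routes by blast
  have "route_flow C d \<xi> R y" using y xi unfolding PiR_def by auto
  then obtain f g :: "nat \<Rightarrow> real" where
    fg: "\<forall>i\<le>length R. 0 \<le> f i \<and> f i \<le> C"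
        "\<forall>i\<in>{1..length R}. f (i - 1) + d \<xi> (R ! (i - 1)) = f i + g i
          \<and> 0 \<le> g i \<and> g i \<le> C * real (y \<xi> (R ! (i - 1)))"
    unfolding route_flow_def by blast
  define n where "n = length R"
  have st: "f k + d \<xi> (R!k) = f (Suc k) + g (Suc k)" "g (Suc k) \<le> C * real (y \<xi> (R!k))" if "k < n" for k
    using fg(2) that unfolding n_def by (auto dest!: bspec[of _ _ "Suc k"])
  have "(\<Sum>k<n. f k + d \<xi> (R!k)) = (\<Sum>k<n. f (Suc k) + g (Suc k))"
    by (rule sum.cong[OF refl], rule st(1), simp)
  then have "(\<Sum>k<n. f k) + (\<Sum>k<n. d \<xi> (R!k)) = (\<Sum>k<n. f (Suc k)) + (\<Sum>k<n. g (Suc k))"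
    by (simp add: sum.distrib)
  moreover have "(\<Sum>k<n. f (Suc k)) - (\<Sum>k<n. f k) = f n - f 0"
    by (simp add: sum_lessThan_telescope sum_subtractf[symmetric])
  ultimately have e1: "(\<Sum>k<n. d \<xi> (R!k)) = f n - f 0 + (\<Sum>k<n. g (Suc k))" by linarith
  have e2: "(\<Sum>k<n. d \<xi> (R!k)) = (\<Sum>v\<in>S. d \<xi> v)"
    using sum_nth_set[OF R(2)] R(1) unfolding n_def by simp
  have "(\<Sum>k<n. g (Suc k)) \<le> (\<Sum>k<n. C * real (y \<xi> (R!k)))" using st(2) by (rule sum_mono) simp
  also have "\<dots> = C * (\<Sum>k<n. real (y \<xi> (R!k)))" by (simp add: sum_distrib_left)
  also have "(\<Sum>k<n. real (y \<xi> (R!k))) = (\<Sum>v\<in>S. real (y \<xi> v))"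
    using sum_nth_set[OF R(2)] R(1) unfolding n_def by simp
  also have "(\<Sum>v\<in>S. real (y \<xi> v)) \<le> (\<Sum>v\<in>S. real (b v))"
    using y(2) xi S unfolding in_box_def by (intro sum_mono) auto
  finally have "(\<Sum>k<n. g (Suc k)) \<le> C * (\<Sum>v\<in>S. real (b v))" using Cpos by simp
  moreover have "f n \<le> C" "0 \<le> f 0" using fg(1) unfolding n_def by auto
  ultimately have "(\<Sum>v\<in>S. d \<xi> v) \<le> C * (1 + (\<Sum>v\<in>S. real (b v)))" using e1 e2 by (simp add: algebra_simps)
  then have "(\<Sum>v\<in>S. d \<xi> v) / C \<le> 1 + (\<Sum>v\<in>S. real (b v))" using Cpos by (simp add: divide_simps mult.commute)
  then have "kk C d \<xi> S \<le> 1 + int (\<Sum>v\<in>S. b v)" unfolding kk_def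
    by (simp add: ceiling_le_iff)
  then have "real_of_int (kk C d \<xi> S) \<le> real_of_int (1 + int (\<Sum>v\<in>S. b v))"
    by (simp only: of_int_le_iff)
  moreover have "real_of_int (1 + int (\<Sum>v\<in>S. b v)) = 1 + (\<Sum>v\<in>S. real (b v))" by simp
  ultimately show ?thesis by linarith
qed

lemma b_feas:
  assumes fin: "finite Vp" and H: "partial_route Vp H" and Cpos: "C > 0"
    and routes: "\<forall>R. is_route Vp R \<longrightarrow> (\<exists>y\<in>PiR C N d R. in_box Vp N b y)"
    and xi: "\<xi> \<in> {1..N}"
  shows "lpfeas Vp b C d \<xi> H (\<lambda>v. real (b v))"
  unfolding lpfeas_def
proof (intro conjI allI impI ballI)
  fix i j assume ij: "i \<le> j \<and> j < length H"
  then show "real_of_int (kk C d \<xi> (VH (subroute H i j))) - 1 \<le> (\<Sum>v\<in>VH (subroute H i j). real (b v))"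
    using route_bound[OF Cpos routes xi, of "Vs H i j"] Vs_ne[OF H] Vs_sub[OF H] Vs_fin[OF fin H]
    by (simp add: subroute_VH)
qed auto

lemma cap:
  assumes fin: "finite Vp" and H: "partial_route Vp H" and w: "\<forall>v\<in>Vp. 0 \<le> w v"
    and sg: "0 \<le> \<sigma>" "\<sigma> < 1"
    and zb: "\<forall>v\<in>Vp. 0 \<le> z v \<and> z v \<le> real (b v)"
    and zc: "\<forall>i j. i \<le> j \<and> j < length H \<longrightarrow> sum z (Vs H i j) \<ge> real_of_int (kk C d \<xi> (Vs H i j)) - 1 - \<sigma>"
  shows "(1 - \<sigma>) * Lstar_xi Vp w b C d \<xi> H \<le> (\<Sum>v\<in>VH H. w v * z v)"
proof -
  define W where "W = 1 - \<sigma>"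
  have Wp: "W > 0" using sg unfolding W_def by simp
  define z' where "z' v = min (real (b v)) (z v / W)" for v
  have feas: "lpfeas Vp b C d \<xi> H z'"
    unfolding lpfeas_def
  proof (intro conjI allI impI ballI)
    fix v assume "v \<in> Vp"
    then show "0 \<le> z' v" "z' v \<le> real (b v)" using zb Wp unfolding z'_def by auto
  next
    fix i j assume ij: "i \<le> j \<and> j < length H"
    define V where "V = Vs H i j"
    have VV: "VH (subroute H i j) = V" using ij subroute_VH unfolding V_def by auto
    have finV: "finite V" "V \<subseteq> Vp" unfolding V_def using Vs_fin[OF fin H] Vs_sub[OF H] ij by auto
    define K where "K = kk C d \<xi> V - 1"
    define Cp where "Cp = {v\<in>V. real (b v) < z v / W}"
    define U where "U = V - Cp"
    have fins: "finite Cp" "finite U" "Cp \<inter> U = {}" "V = Cp \<union> U" using finV unfolding Cp_def U_def by auto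
    have zV: "sum z V \<ge> real_of_int K - \<sigma>" using zc ij unfolding K_def V_def by auto
    have zCp: "sum z Cp \<le> real (\<Sum>v\<in>Cp. b v)"
      using zb finV unfolding Cp_def by (auto intro!: sum_mono)
    have z'Cp: "sum z' Cp = real (\<Sum>v\<in>Cp. b v)" unfolding z'_def Cp_def by (auto intro!: sum.cong)
    have z'U: "sum z' U = sum z U / W" unfolding z'_def U_def Cp_def
      by (simp add: sum_divide_distrib) (rule sum.cong, auto)
    have sV: "sum z V = sum z Cp + sum z U" "sum z' V = sum z' Cp + sum z' U"
      using fins by (simp_all add: sum.union_disjoint)
    have zU0: "0 \<le> sum z U" using zb finV unfolding U_def by (auto intro!: sum_nonneg)
    define B where "B = (\<Sum>v\<in>Cp. b v)"
    have "real_of_int K \<le> sum z' V"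
    proof (cases "real_of_int K \<le> real B")
      case True
      have "0 \<le> sum z U / W" using zU0 Wp by simp
      then show ?thesis using True sV z'Cp z'U unfolding B_def by simp
    next
      case False
      have "real B = real_of_int (int B)" by simp
      then have "\<not> K \<le> int B" using False by (metis of_int_le_iff)
      then have "int B \<le> K - 1" by linarith
      then have "real_of_int (int B) \<le> real_of_int (K - 1)" by (simp only: of_int_le_iff)
      then have KB: "real B \<le> real_of_int K - 1" by simp
      have sU: "sum z U \<ge> real_of_int K - \<sigma> - real B" using zV sV zCp unfolding B_def by linarith
      have "real_of_int K * W \<le> real B * W + sum z U"
      proof -
        have "\<sigma> * (real_of_int K - 1 - real B) \<ge> 0" using KB sg by simp
        then show ?thesis using sU unfolding W_def by (simp add: algebra_simps)
      qed
      then have "real_of_int K \<le> real B + sum z U / W" using Wp by (simp add: field_simps)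
      then show ?thesis using sV z'Cp z'U unfolding B_def by simp
    qed
    then show "real_of_int (kk C d \<xi> (VH (subroute H i j))) - 1 \<le> sum z' (VH (subroute H i j))"
      unfolding VV K_def by simp
  qed
  have "Lstar_xi Vp w b C d \<xi> H \<le> (\<Sum>v\<in>VH H. w v * z' v)" by (rule Lstar_le[OF H w feas])
  then have "W * Lstar_xi Vp w b C d \<xi> H \<le> W * (\<Sum>v\<in>VH H. w v * z' v)" using Wp by simp
  also have "\<dots> = (\<Sum>v\<in>VH H. w v * (W * z' v))" by (simp add: sum_distrib_left algebra_simps)
  also have "\<dots> \<le> (\<Sum>v\<in>VH H. w v * z v)"
  proof (rule sum_mono)
    fix v assume "v \<in> VH H"
    then have v: "v \<in> Vp" using VH_sub[OF H] by auto
    have "W * z' v \<le> z v" unfolding z'_def using Wp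
      by (simp add: min_def field_simps)
    then show "w v * (W * z' v) \<le> w v * z v" using w v by (simp add: mult_left_mono)
  qed
  finally show ?thesis unfolding W_def .
qed



lemma sum_vars:
  fixes f :: "(nat \<times> nat) + nat \<Rightarrow> real"
  assumes "finite J" "finite A"
  shows "(\<Sum>q\<in>Inl ` J \<union> Inr ` A. f q) = (\<Sum>ij\<in>J. f (Inl ij)) + (\<Sum>v\<in>A. f (Inr v))"
proof -
  have "(\<Sum>q\<in>Inl ` J \<union> Inr ` A. f q) = (\<Sum>q\<in>Inl ` J. f q) + (\<Sum>q\<in>Inr ` A. f q)"
    using assms by (intro sum.union_disjoint) auto
  also have "(\<Sum>q\<in>Inl ` J. f q) = (\<Sum>ij\<in>J. f (Inl ij))" by (simp add: sum.reindex)
  also have "(\<Sum>q\<in>Inr ` A. f q) = (\<Sum>v\<in>A. f (Inr v))" by (simp add: sum.reindex)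
  finally show ?thesis .
qed

definition Jset :: "nat set list \<Rightarrow> (nat \<times> nat) set" where
  "Jset H = {(i,j). i \<le> j \<and> j < length H}"

lemma Jset_fin: "finite (Jset H)"
proof -
  have "Jset H \<subseteq> {..<length H} \<times> {..<length H}" unfolding Jset_def by auto
  then show ?thesis by (rule finite_subset) simp
qed

lemma Vs_VH: "j < length H \<Longrightarrow> Vs H i j \<subseteq> VH H"
proof -
  assume "j < length H"
  then have "H ! a \<in> set H" if "a \<in> {i..j}" for a using that by auto
  then show ?thesis unfolding Vs_def VH_def by blast
qed

lemma dual_exists:
  fixes K :: "nat \<times> nat \<Rightarrow> real" and L :: real
  assumes fin: "finite Vp" and H: "partial_route Vp H" and w: "\<forall>v\<in>Vp. 0 \<le> w v"
    and Lnn: "0 \<le> L"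
    and capH: "\<And>u z. 0 \<le> u \<Longrightarrow> u < 1 \<Longrightarrow> (\<forall>v\<in>Vp. 0 \<le> z v \<and> z v \<le> real (b v)) \<Longrightarrow>
        (\<forall>ij\<in>Jset H. sum z (Vs H (fst ij) (snd ij)) \<ge> K ij - u) \<Longrightarrow> (1 - u) * L \<le> (\<Sum>v\<in>VH H. w v * z v)"
  shows "\<exists>\<pi> \<mu>. (\<forall>ij\<in>Jset H. 0 \<le> \<pi> ij) \<and> (\<forall>v\<in>VH H. 0 \<le> \<mu> v)
     \<and> (\<forall>v\<in>VH H. (\<Sum>ij\<in>{ij\<in>Jset H. v \<in> Vs H (fst ij) (snd ij)}. \<pi> ij) - \<mu> v \<le> w v)
     \<and> L \<le> (\<Sum>ij\<in>Jset H. K ij * \<pi> ij) - (\<Sum>v\<in>VH H. real (b v) * \<mu> v)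
     \<and> (\<Sum>ij\<in>Jset H. \<pi> ij) \<le> L"
proof -
  define J where "J = Jset H"
  define VV where "VV = VH H"
  have finJ: "finite J" unfolding J_def by (rule Jset_fin)
  have finVV: "finite VV" unfolding VV_def by (rule VH_fin[OF fin H])
  have VsVV: "Vs H (fst ij) (snd ij) \<subseteq> VV" if "ij \<in> J" for ij
  proof -
    have "snd ij < length H" using that unfolding J_def Jset_def by auto
    then show ?thesis using Vs_VH unfolding VV_def by blast
  qed
  have finVs: "finite (Vs H (fst ij) (snd ij))" if "ij \<in> J" for ij
    using VsVV[OF that] finVV finite_subset by blast
  define Vars where "Vars = Inl ` J \<union> Inr ` VV"
  define r1 where "r1 ij = ((\<lambda>q. if q = Inl ij then -1 else 0) :: (nat\<times>nat)+nat \<Rightarrow> real, 0::real)" for ij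
  define r2 where "r2 v = ((\<lambda>q. if q = Inr v then -1 else 0) :: (nat\<times>nat)+nat \<Rightarrow> real, 0::real)" for v
  define r3 where "r3 v = ((\<lambda>q. case q of Inl ij \<Rightarrow> if ij \<in> J \<and> v \<in> Vs H (fst ij) (snd ij) then 1 else 0
                               | Inr u \<Rightarrow> if u = v then -1 else 0) :: (nat\<times>nat)+nat \<Rightarrow> real, w v)" for v
  define r4 where "r4 = ((\<lambda>q. case q of Inl ij \<Rightarrow> if ij \<in> J then - K ij else 0
                               | Inr u \<Rightarrow> if u \<in> VV then real (b u) else 0) :: (nat\<times>nat)+nat \<Rightarrow> real, - L)"
  define r5 where "r5 = ((\<lambda>q. case q of Inl ij \<Rightarrow> if ij \<in> J then 1 else 0
                               | Inr u \<Rightarrow> 0) :: (nat\<times>nat)+nat \<Rightarrow> real, L)"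
  define R where "R = r1 ` J \<union> r2 ` VV \<union> r3 ` VV \<union> {r4, r5}"
  have finR: "finite R" unfolding R_def using finJ finVV by auto
  have van: "\<forall>(a,c)\<in>R. \<forall>q. q \<notin> Vars \<longrightarrow> a q = 0"
    unfolding R_def Vars_def r1_def r2_def r3_def r4_def r5_def
    by (auto split: sum.splits)
  have finVars: "finite Vars" unfolding Vars_def using finJ finVV by auto
  define Inv where "Inv = (\<lambda>(a :: (nat\<times>nat)+nat \<Rightarrow> real, c :: real). \<exists>z t u. (\<forall>v. 0 \<le> z v) \<and> 0 \<le> t \<and> 0 \<le> u
      \<and> (\<forall>ij\<in>J. a (Inl ij) \<le> sum z (Vs H (fst ij) (snd ij)) - t * K ij + u)
      \<and> (\<forall>v\<in>VV. a (Inr v) \<le> t * real (b v) - z v)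
      \<and> (\<Sum>v\<in>VV. z v * w v) - t * L + u * L \<le> c)"
  have inv: "Inv r" if "nnc R r" for r
    using that
  proof (induction rule: nnc.induct)
    case (nnc_base r)
    then consider (a) ij where "ij \<in> J" "r = r1 ij" | (b) v where "v \<in> VV" "r = r2 v"
      | (c) v where "v \<in> VV" "r = r3 v" | (d) "r = r4" | (e) "r = r5"
      unfolding R_def by blast
    then show ?case
    proof cases
      case (a ij)
      have "Inv (r1 ij)" unfolding Inv_def r1_def
        by (intro case_prodI exI[of _ "\<lambda>_. 0"] exI[of _ 0]) auto
      then show ?thesis using a by simp
    next
      case (b v)
      have "Inv (r2 v)" unfolding Inv_def r2_def
        by (intro case_prodI exI[of _ "\<lambda>_. 0"] exI[of _ 0]) auto
      then show ?thesis using b by simp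
    next
      case (c v0)
      let ?z = "\<lambda>v. if v = v0 then 1 else (0::real)"
      have "(\<Sum>v\<in>VV. ?z v * w v) = (\<Sum>v\<in>VV. if v = v0 then w v else 0)" by (rule sum.cong) auto
      also have "\<dots> = w v0" using c finVV by (simp add: sum.delta)
      finally have "(\<Sum>v\<in>VV. ?z v * w v) = w v0" .
      moreover have "(if ij \<in> J \<and> v0 \<in> Vs H (fst ij) (snd ij) then 1 else 0) \<le> sum ?z (Vs H (fst ij) (snd ij))"
        if "ij \<in> J" for ij
        using finVs[OF that] by (simp add: sum.delta)
      ultimately have "Inv (r3 v0)" unfolding Inv_def r3_def using c
        by (intro case_prodI exI[of _ ?z] exI[of _ 0]) auto
      then show ?thesis using c by simp
    next
      case d
      have "Inv r4" unfolding Inv_def r4_def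
        by (intro case_prodI exI[of _ "\<lambda>_. 0"] exI[of _ 1] exI[of _ 0]) auto
      then show ?thesis using d by simp
    next
      case e
      have "Inv r5" unfolding Inv_def r5_def
        by (intro case_prodI exI[of _ "\<lambda>_. 0"] exI[of _ 0] exI[of _ 1]) auto
      then show ?thesis using e by simp
    qed
  next
    case nnc_zero
    then show ?case unfolding Inv_def by (intro case_prodI exI[of _ "\<lambda>_. 0"] exI[of _ 0]) auto
  next
    case (nnc_add a c a' c')
    obtain z t u where A: "(\<forall>v. 0 \<le> z v)" "0 \<le> t" "0 \<le> u"
      "\<forall>ij\<in>J. a (Inl ij) \<le> sum z (Vs H (fst ij) (snd ij)) - t * K ij + u"
      "\<forall>v\<in>VV. a (Inr v) \<le> t * real (b v) - z v"
      "(\<Sum>v\<in>VV. z v * w v) - t * L + u * L \<le> c" using nnc_add.IH(1) unfolding Inv_def by auto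
    obtain z' t' u' where B: "(\<forall>v. 0 \<le> z' v)" "0 \<le> t'" "0 \<le> u'"
      "\<forall>ij\<in>J. a' (Inl ij) \<le> sum z' (Vs H (fst ij) (snd ij)) - t' * K ij + u'"
      "\<forall>v\<in>VV. a' (Inr v) \<le> t' * real (b v) - z' v"
      "(\<Sum>v\<in>VV. z' v * w v) - t' * L + u' * L \<le> c'" using nnc_add.IH(2) unfolding Inv_def by auto
    have h1: "\<forall>ij\<in>J. a (Inl ij) + a' (Inl ij) \<le> sum (\<lambda>v. z v + z' v) (Vs H (fst ij) (snd ij)) - (t + t') * K ij + (u + u')"
      using A(4) B(4) by (simp add: sum.distrib algebra_simps) (smt (verit))
    have h2: "\<forall>v\<in>VV. a (Inr v) + a' (Inr v) \<le> (t + t') * real (b v) - (z v + z' v)"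
      using A(5) B(5) by (simp add: algebra_simps) (smt (verit))
    have h3: "(\<Sum>v\<in>VV. (z v + z' v) * w v) - (t + t') * L + (u + u') * L \<le> c + c'"
      using A(6) B(6) by (simp add: sum.distrib algebra_simps)
    show ?case unfolding Inv_def prod.case
      by (rule exI[of _ "\<lambda>v. z v + z' v"], rule exI[of _ "t + t'"], rule exI[of _ "u + u'"])
        (use A B h1 h2 h3 in auto)
  next
    case (nnc_scale a c s)
    obtain z t u where A: "(\<forall>v. 0 \<le> z v)" "0 \<le> t" "0 \<le> u"
      "\<forall>ij\<in>J. a (Inl ij) \<le> sum z (Vs H (fst ij) (snd ij)) - t * K ij + u"
      "\<forall>v\<in>VV. a (Inr v) \<le> t * real (b v) - z v"
      "(\<Sum>v\<in>VV. z v * w v) - t * L + u * L \<le> c" using nnc_scale.IH unfolding Inv_def by auto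
    have h1: "\<forall>ij\<in>J. s * a (Inl ij) \<le> sum (\<lambda>v. s * z v) (Vs H (fst ij) (snd ij)) - s * t * K ij + s * u"
    proof
      fix ij assume "ij \<in> J"
      then have "s * a (Inl ij) \<le> s * (sum z (Vs H (fst ij) (snd ij)) - t * K ij + u)"
        using A(4) nnc_scale.hyps by (simp add: mult_left_mono)
      then show "s * a (Inl ij) \<le> sum (\<lambda>v. s * z v) (Vs H (fst ij) (snd ij)) - s * t * K ij + s * u"
        by (simp add: sum_distrib_left[symmetric] algebra_simps)
    qed
    have h2: "\<forall>v\<in>VV. s * a (Inr v) \<le> s * t * real (b v) - s * z v"
    proof
      fix v assume "v \<in> VV"
      then have "s * a (Inr v) \<le> s * (t * real (b v) - z v)"
        using A(5) nnc_scale.hyps by (simp add: mult_left_mono)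
      then show "s * a (Inr v) \<le> s * t * real (b v) - s * z v" by (simp add: algebra_simps)
    qed
    have h3: "(\<Sum>v\<in>VV. s * z v * w v) - s * t * L + s * u * L \<le> s * c"
    proof -
      have "s * ((\<Sum>v\<in>VV. z v * w v) - t * L + u * L) \<le> s * c"
        using A(6) nnc_scale.hyps by (simp add: mult_left_mono)
      then show ?thesis by (simp add: sum_distrib_left algebra_simps)
    qed
    show ?case unfolding Inv_def prod.case
      by (rule exI[of _ "\<lambda>v. s * z v"], rule exI[of _ "s * t"], rule exI[of _ "s * u"])
        (use A nnc_scale.hyps h1 h2 h3 in auto)
  qed
  have feas: "\<exists>x. \<forall>(a,c)\<in>R. (\<Sum>q\<in>Vars. a q * x q) \<le> c"
  proof (rule ccontr)
    assume "\<not> ?thesis"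
    then obtain c where c: "c < 0" "nnc R (\<lambda>_. 0, c)" using farkas[OF finVars finR van] by blast
    then obtain z t u where A: "(\<forall>v. 0 \<le> z v)" "0 \<le> t" "0 \<le> u"
      "\<forall>ij\<in>J. 0 \<le> sum z (Vs H (fst ij) (snd ij)) - t * K ij + u"
      "\<forall>v\<in>VV. 0 \<le> t * real (b v) - z v"
      "(\<Sum>v\<in>VV. z v * w v) - t * L + u * L \<le> c" using inv[OF c(2)] unfolding Inv_def by auto
    show False
    proof (cases "t = 0")
      case True
      have "z v = 0" if "v \<in> VV" for v
      proof -
        have "0 \<le> t * real (b v) - z v" using A(5) that by blast
        then have "z v \<le> 0" using True by simp
        then show ?thesis using A(1) by (meson antisym)
      qed
      then have "(\<Sum>v\<in>VV. z v * w v) = 0" by simp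
      moreover have "0 \<le> u * L" using A(3) Lnn by simp
      ultimately show False using A(6) c(1) True by simp
    next
      case False
      then have tp: "t > 0" using A(2) by simp
      define z' where "z' v = (if v \<in> VV then z v / t else 0)" for v
      define u' where "u' = u / t"
      have u'0: "0 \<le> u'" unfolding u'_def using A(3) tp by simp
      have z'b: "\<forall>v\<in>Vp. 0 \<le> z' v \<and> z' v \<le> real (b v)"
        using A(1,5) tp unfolding z'_def by (auto simp: field_simps)
      have z'c: "\<forall>ij\<in>Jset H. sum z' (Vs H (fst ij) (snd ij)) \<ge> K ij - u'"
      proof
        fix ij assume ij: "ij \<in> Jset H"
        then have sub: "Vs H (fst ij) (snd ij) \<subseteq> VV" using VsVV unfolding J_def by blast
        have "sum z' (Vs H (fst ij) (snd ij)) = sum z (Vs H (fst ij) (snd ij)) / t"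
          unfolding sum_divide_distrib z'_def by (rule sum.cong) (use sub in auto)
        moreover have "t * K ij - u \<le> sum z (Vs H (fst ij) (snd ij))" using A(4) ij unfolding J_def by auto
        ultimately show "sum z' (Vs H (fst ij) (snd ij)) \<ge> K ij - u'"
          unfolding u'_def using tp by (simp add: field_simps)
      qed
      have val: "(\<Sum>v\<in>VH H. w v * z' v) = (\<Sum>v\<in>VV. z v * w v) / t"
        unfolding z'_def VV_def by (auto simp: sum_divide_distrib intro!: sum.cong)
      have lt: "(\<Sum>v\<in>VH H. w v * z' v) < (1 - u') * L"
      proof -
        have "(\<Sum>v\<in>VV. z v * w v) < t * L - u * L" using A(6) c(1) by linarith
        then have "(\<Sum>v\<in>VV. z v * w v) / t < (t * L - u * L) / t" using tp by (simp add: divide_strict_right_mono)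
        also have "(t * L - u * L) / t = (1 - u') * L" unfolding u'_def using tp by (simp add: field_simps)
        finally show ?thesis using val by simp
      qed
      have nn: "0 \<le> (\<Sum>v\<in>VH H. w v * z' v)"
        using z'b w VH_sub[OF H] by (auto intro!: sum_nonneg mult_nonneg_nonneg)
      show False
      proof (cases "u' < 1")
        case True
        then show False using capH[OF u'0 True z'b z'c] lt by simp
      next
        case False
        then have "(1 - u') * L \<le> 0" using Lnn by (simp add: mult_nonpos_nonneg)
        then show False using lt nn by simp
      qed
    qed
  qed
  then obtain x where x: "\<forall>(a,c)\<in>R. (\<Sum>q\<in>Vars. a q * x q) \<le> c" by blast
  define \<pi> where "\<pi> ij = x (Inl ij)" for ij
  define \<mu> where "\<mu> v = x (Inr v)" for v
  have ev: "(\<Sum>q\<in>Vars. a q * x q) = (\<Sum>ij\<in>J. a (Inl ij) * \<pi> ij) + (\<Sum>v\<in>VV. a (Inr v) * \<mu> v)" for a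
    unfolding Vars_def \<pi>_def \<mu>_def by (rule sum_vars[OF finJ finVV])
  have D1: "\<forall>ij\<in>J. 0 \<le> \<pi> ij"
  proof
    fix ij assume ij: "ij \<in> J"
    then have "r1 ij \<in> R" unfolding R_def by auto
    then have "(\<Sum>q\<in>Vars. fst (r1 ij) q * x q) \<le> snd (r1 ij)" using x by auto
    moreover have "(\<Sum>ij'\<in>J. fst (r1 ij) (Inl ij') * \<pi> ij') = - \<pi> ij"
    proof -
      have "(\<Sum>ij'\<in>J. fst (r1 ij) (Inl ij') * \<pi> ij') = (\<Sum>ij'\<in>J. if ij' = ij then - \<pi> ij' else 0)"
        unfolding r1_def by (rule sum.cong) auto
      also have "\<dots> = - \<pi> ij" using ij finJ by (simp add: sum.delta)
      finally show ?thesis .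
    qed
    moreover have "(\<Sum>v\<in>VV. fst (r1 ij) (Inr v) * \<mu> v) = 0" unfolding r1_def by simp
    ultimately show "0 \<le> \<pi> ij" unfolding ev by (simp add: r1_def)
  qed
  have D2: "\<forall>v\<in>VV. 0 \<le> \<mu> v"
  proof
    fix v assume v: "v \<in> VV"
    then have "r2 v \<in> R" unfolding R_def by auto
    then have "(\<Sum>q\<in>Vars. fst (r2 v) q * x q) \<le> snd (r2 v)" using x by auto
    moreover have "(\<Sum>u\<in>VV. fst (r2 v) (Inr u) * \<mu> u) = - \<mu> v"
    proof -
      have "(\<Sum>u\<in>VV. fst (r2 v) (Inr u) * \<mu> u) = (\<Sum>u\<in>VV. if u = v then - \<mu> u else 0)"
        unfolding r2_def by (rule sum.cong) auto
      also have "\<dots> = - \<mu> v" using v finVV by (simp add: sum.delta)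
      finally show ?thesis .
    qed
    moreover have "(\<Sum>ij\<in>J. fst (r2 v) (Inl ij) * \<pi> ij) = 0" unfolding r2_def by simp
    ultimately show "0 \<le> \<mu> v" unfolding ev by (simp add: r2_def)
  qed
  have D3: "\<forall>v\<in>VV. (\<Sum>ij\<in>{ij\<in>J. v \<in> Vs H (fst ij) (snd ij)}. \<pi> ij) - \<mu> v \<le> w v"
  proof
    fix v assume v: "v \<in> VV"
    then have "r3 v \<in> R" unfolding R_def by auto
    then have "(\<Sum>q\<in>Vars. fst (r3 v) q * x q) \<le> snd (r3 v)" using x by auto
    moreover have "(\<Sum>ij\<in>J. fst (r3 v) (Inl ij) * \<pi> ij)
        = (\<Sum>ij\<in>{ij\<in>J. v \<in> Vs H (fst ij) (snd ij)}. \<pi> ij)"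
    proof -
      have "(\<Sum>ij\<in>J. fst (r3 v) (Inl ij) * \<pi> ij) = (\<Sum>ij\<in>J. if v \<in> Vs H (fst ij) (snd ij) then \<pi> ij else 0)"
        unfolding r3_def by (rule sum.cong) auto
      also have "\<dots> = (\<Sum>ij\<in>{ij\<in>J. v \<in> Vs H (fst ij) (snd ij)}. \<pi> ij)"
        using finJ by (simp add: sum.inter_filter)
      finally show ?thesis .
    qed
    moreover have "(\<Sum>u\<in>VV. fst (r3 v) (Inr u) * \<mu> u) = - \<mu> v"
    proof -
      have "(\<Sum>u\<in>VV. fst (r3 v) (Inr u) * \<mu> u) = (\<Sum>u\<in>VV. if u = v then - \<mu> u else 0)"
        unfolding r3_def by (rule sum.cong) auto
      also have "\<dots> = - \<mu> v" using v finVV by (simp add: sum.delta)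
      finally show ?thesis .
    qed
    ultimately show "(\<Sum>ij\<in>{ij\<in>J. v \<in> Vs H (fst ij) (snd ij)}. \<pi> ij) - \<mu> v \<le> w v"
      unfolding ev by (simp add: r3_def)
  qed
  have D4: "L \<le> (\<Sum>ij\<in>J. K ij * \<pi> ij) - (\<Sum>v\<in>VV. real (b v) * \<mu> v)"
  proof -
    have "r4 \<in> R" unfolding R_def by auto
    then have "(\<Sum>q\<in>Vars. fst r4 q * x q) \<le> snd r4" using x by auto
    moreover have "(\<Sum>ij\<in>J. fst r4 (Inl ij) * \<pi> ij) = - (\<Sum>ij\<in>J. K ij * \<pi> ij)"
      unfolding r4_def by (simp add: sum_negf[symmetric])
    moreover have "(\<Sum>v\<in>VV. fst r4 (Inr v) * \<mu> v) = (\<Sum>v\<in>VV. real (b v) * \<mu> v)"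
      unfolding r4_def by simp
    ultimately show ?thesis unfolding ev r4_def by simp
  qed
  have D5: "(\<Sum>ij\<in>J. \<pi> ij) \<le> L"
  proof -
    have "r5 \<in> R" unfolding R_def by auto
    then have "(\<Sum>q\<in>Vars. fst r5 q * x q) \<le> snd r5" using x by auto
    then show ?thesis unfolding ev r5_def by simp
  qed
  show ?thesis using D1 D2 D3 D4 D5 unfolding J_def VV_def by blast
qed


lemma regroup:
  fixes f :: "'b \<Rightarrow> real" and g :: "'a \<Rightarrow> real" and h :: "'b \<Rightarrow> 'a"
  assumes "finite A" "finite J" "h ` J \<subseteq> A"
  shows "(\<Sum>S\<in>A. (\<Sum>ij\<in>{ij\<in>J. h ij = S}. f ij) * g S) = (\<Sum>ij\<in>J. f ij * g (h ij))"
proof -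
  have "(\<Sum>ij\<in>J. f ij * g (h ij)) = (\<Sum>S\<in>h ` J. \<Sum>ij\<in>{ij\<in>J. h ij = S}. f ij * g (h ij))"
    using assms(2) by (rule sum.image_gen)
  also have "\<dots> = (\<Sum>S\<in>h ` J. (\<Sum>ij\<in>{ij\<in>J. h ij = S}. f ij) * g S)"
    by (rule sum.cong[OF refl]) (simp add: sum_distrib_right)
  also have "\<dots> = (\<Sum>S\<in>A. (\<Sum>ij\<in>{ij\<in>J. h ij = S}. f ij) * g S)"
  proof (rule sum.mono_neutral_left[OF assms(1) assms(3)])
    show "\<forall>S\<in>A - h ` J. (\<Sum>ij\<in>{ij\<in>J. h ij = S}. f ij) * g S = 0"
    proof
      fix S assume "S \<in> A - h ` J"
      then have e: "{ij\<in>J. h ij = S} = {}" by auto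
      show "(\<Sum>ij\<in>{ij\<in>J. h ij = S}. f ij) * g S = 0" unfolding e by simp
    qed
  qed
  finally show ?thesis by simp
qed

lemma nesubs_fin: "finite Vp \<Longrightarrow> finite (nesubs Vp)"
  unfolding nesubs_def by simp

lemma Vs_image_nesubs: "partial_route Vp H \<Longrightarrow> (\<lambda>ij. Vs H (fst ij) (snd ij)) ` Jset H \<subseteq> nesubs Vp"
  unfolding Jset_def using Vs_nesubs by fastforce

lemma part2:
  fixes Vp :: "nat set" and N :: nat and p :: "nat \<Rightarrow> real" and d :: "nat \<Rightarrow> nat \<Rightarrow> real"
    and C :: real and w :: "nat \<Rightarrow> real" and b :: "nat \<Rightarrow> nat"
    and X :: "(nat set \<Rightarrow> real) set" and H :: "nat set list"
  assumes fin: "finite Vp" and Cpos: "C > 0"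
    and prob: "\<forall>\<xi>\<in>{1..N}. 0 \<le> p \<xi>"
    and wnn: "\<forall>v\<in>Vp. 0 \<le> w v"
    and routes: "\<forall>R. is_route Vp R \<longrightarrow> (\<exists>y\<in>PiR C N d R. in_box Vp N b y)"
    and Xs: "X \<subseteq> Xsub Vp"
    and H: "partial_route Vp H"
    and P: "inP Vp N p w b C d X x \<theta>"
  shows "(\<Sum>v\<in>VH H. \<theta> v) \<ge> Lstar Vp N p w b C d H * W_OF Vp x H"
proof -
  have x: "x \<in> Xsub Vp" using P Xs unfolding inP_def by auto
  obtain y :: "nat \<Rightarrow> nat \<Rightarrow> real" where y: "in_box Vp N b y"
    "\<forall>\<xi>\<in>{1..N}. \<forall>S\<in>nesubs Vp. sum (y \<xi>) S \<ge> real_of_int (kk C d \<xi> S) + sum x (EE Vp S) - real (card S)"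
    "\<forall>v\<in>Vp. 0 \<le> \<theta> v \<and> \<theta> v \<ge> (\<Sum>\<xi>\<in>{1..N}. p \<xi> * w v * y \<xi> v)"
    using P unfolding inP_def by blast
  define \<sigma> where "\<sigma> = sigma Vp x H"
  have W: "W_OF Vp x H = 1 - \<sigma>" unfolding \<sigma>_def by (rule W_sigma)
  have s0: "0 \<le> \<sigma>" unfolding \<sigma>_def by (rule sigma_nonneg[OF fin x H])
  have Lnn: "0 \<le> Lstar_xi Vp w b C d \<xi> H" if "\<xi> \<in> {1..N}" for \<xi>
    using Lstar_ge0[OF H wnn b_feas[OF fin H Cpos routes that]] .
  have LS: "0 \<le> Lstar Vp N p w b C d H" unfolding Lstar_def
    using Lnn prob by (auto intro!: sum_nonneg mult_nonneg_nonneg)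
  have th0: "0 \<le> (\<Sum>v\<in>VH H. \<theta> v)" using y(3) VH_sub[OF H] by (auto intro!: sum_nonneg)
  show ?thesis
  proof (cases "\<sigma> < 1")
    case False
    then have "Lstar Vp N p w b C d H * W_OF Vp x H \<le> 0" unfolding W using LS
      by (simp add: mult_nonneg_nonpos)
    then show ?thesis using th0 by linarith
  next
    case True
    have capp: "(1 - \<sigma>) * Lstar_xi Vp w b C d \<xi> H \<le> (\<Sum>v\<in>VH H. w v * y \<xi> v)" if xi: "\<xi> \<in> {1..N}" for \<xi>
    proof (rule cap[OF fin H wnn s0 True])
      show "\<forall>v\<in>Vp. 0 \<le> y \<xi> v \<and> y \<xi> v \<le> real (b v)" using y(1) xi unfolding in_box_def by auto
      show "\<forall>i j. i \<le> j \<and> j < length H \<longrightarrow> real_of_int (kk C d \<xi> (Vs H i j)) - 1 - \<sigma> \<le> sum (y \<xi>) (Vs H i j)"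
      proof (intro allI impI)
        fix i j assume ij: "i \<le> j \<and> j < length H"
        have "sum (y \<xi>) (Vs H i j) \<ge> real_of_int (kk C d \<xi> (Vs H i j)) + sum x (EE Vp (Vs H i j)) - real (card (Vs H i j))"
          using y(2) xi Vs_nesubs[OF H] ij by blast
        moreover have "real (card (Vs H i j)) - 1 - sum x (EE Vp (Vs H i j)) \<le> \<sigma>"
          unfolding \<sigma>_def using s_le_sigma[OF fin x H] ij by blast
        ultimately show "real_of_int (kk C d \<xi> (Vs H i j)) - 1 - \<sigma> \<le> sum (y \<xi>) (Vs H i j)" by linarith
      qed
    qed
    have "Lstar Vp N p w b C d H * W_OF Vp x H = (\<Sum>\<xi>\<in>{1..N}. p \<xi> * ((1 - \<sigma>) * Lstar_xi Vp w b C d \<xi> H))"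
      unfolding Lstar_def W sum_distrib_right by (rule sum.cong) simp_all
    also have "\<dots> \<le> (\<Sum>\<xi>\<in>{1..N}. p \<xi> * (\<Sum>v\<in>VH H. w v * y \<xi> v))"
      by (rule sum_mono) (use capp prob in \<open>auto intro: mult_left_mono\<close>)
    also have "\<dots> = (\<Sum>v\<in>VH H. \<Sum>\<xi>\<in>{1..N}. p \<xi> * w v * y \<xi> v)"
      by (simp add: sum_distrib_left mult.assoc) (rule sum.swap)
    also have "\<dots> \<le> (\<Sum>v\<in>VH H. \<theta> v)"
      by (rule sum_mono) (use y(3) VH_sub[OF H] in auto)
    finally show ?thesis .
  qed
qed


lemma part1:
  fixes Vp :: "nat set" and N :: nat and p :: "nat \<Rightarrow> real" and d :: "nat \<Rightarrow> nat \<Rightarrow> real"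
    and C :: real and w :: "nat \<Rightarrow> real" and b :: "nat \<Rightarrow> nat"
    and X :: "(nat set \<Rightarrow> real) set" and H :: "nat set list"
  assumes fin: "finite Vp" and Cpos: "C > 0"
    and prob: "\<forall>\<xi>\<in>{1..N}. 0 \<le> p \<xi>" "(\<Sum>\<xi>\<in>{1..N}. p \<xi>) = 1"
    and wnn: "\<forall>v\<in>Vp. 0 \<le> w v"
    and routes: "\<forall>R. is_route Vp R \<longrightarrow> (\<exists>y\<in>PiR C N d R. in_box Vp N b y)"
    and Xs: "X \<subseteq> Xsub Vp"
    and H: "partial_route Vp H"
  shows "\<exists>\<alpha> \<beta>. inA Vp N w \<alpha> \<beta> \<and>
            (\<forall>x\<in>X. \<forall>\<theta> :: nat \<Rightarrow> real. (\<forall>v\<in>Vp. 0 \<le> \<theta> v) \<longrightarrow>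
               proj_ineq Vp N p w b C d \<alpha> \<beta> x \<theta> \<longrightarrow>
               (\<Sum>v\<in>VH H. \<theta> v) \<ge> Lstar Vp N p w b C d H * W_OF Vp x H)"
proof -
  define J where "J = Jset H"
  define VV where "VV = VH H"
  define hV where "hV ij = Vs H (fst ij) (snd ij)" for ij
  define K where "K \<xi> ij = real_of_int (kk C d \<xi> (hV ij)) - 1" for \<xi> ij
  define LL where "LL \<xi> = Lstar_xi Vp w b C d \<xi> H" for \<xi>
  have finJ: "finite J" unfolding J_def by (rule Jset_fin)
  have finVV: "finite VV" unfolding VV_def by (rule VH_fin[OF fin H])
  have VVsub: "VV \<subseteq> Vp" unfolding VV_def by (rule VH_sub[OF H])
  have hVVV: "hV ij \<subseteq> VV" if "ij \<in> J" for ij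
  proof -
    have "snd ij < length H" using that unfolding J_def Jset_def by auto
    then show ?thesis using Vs_VH unfolding VV_def hV_def by blast
  qed
  have himg: "hV ` J \<subseteq> nesubs Vp" unfolding hV_def J_def by (rule Vs_image_nesubs[OF H])
  have finNS: "finite (nesubs Vp)" by (rule nesubs_fin[OF fin])
  have LLnn: "0 \<le> LL \<xi>" if "\<xi> \<in> {1..N}" for \<xi>
    unfolding LL_def using Lstar_ge0[OF H wnn b_feas[OF fin H Cpos routes that]] .
  have N1: "{1..N} \<noteq> {}"
  proof
    assume "{1..N} = {}"
    then have "(\<Sum>\<xi>\<in>{1..N}. p \<xi>) = 0" by simp
    then show False using prob(2) by simp
  qed
  define Dual where "Dual \<xi> \<pi> \<mu> \<longleftrightarrow> (\<forall>ij\<in>J. 0 \<le> \<pi> ij) \<and> (\<forall>v\<in>VV. 0 \<le> \<mu> v)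
     \<and> (\<forall>v\<in>VV. (\<Sum>ij\<in>{ij\<in>J. v \<in> hV ij}. \<pi> ij) - \<mu> v \<le> w v)
     \<and> LL \<xi> \<le> (\<Sum>ij\<in>J. K \<xi> ij * \<pi> ij) - (\<Sum>v\<in>VV. real (b v) * \<mu> v)
     \<and> (\<Sum>ij\<in>J. \<pi> ij) \<le> LL \<xi>" for \<xi> and \<pi> :: "nat \<times> nat \<Rightarrow> real" and \<mu> :: "nat \<Rightarrow> real"
  have "\<exists>pm. Dual \<xi> (fst pm) (snd pm)" if xi: "\<xi> \<in> {1..N}" for \<xi>
  proof -
    have "\<exists>\<pi> \<mu>. Dual \<xi> \<pi> \<mu>"
      unfolding Dual_def J_def VV_def hV_def
    proof (rule dual_exists[OF fin H wnn LLnn[OF xi]])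
      fix u z assume u: "0 \<le> u" "u < 1" and zb: "\<forall>v\<in>Vp. 0 \<le> z v \<and> z v \<le> real (b v)"
        and zc: "\<forall>ij\<in>Jset H. K \<xi> ij - u \<le> sum z (Vs H (fst ij) (snd ij))"
      show "(1 - u) * LL \<xi> \<le> (\<Sum>v\<in>VH H. w v * z v)"
        unfolding LL_def
      proof (rule cap[OF fin H wnn u zb])
        show "\<forall>i j. i \<le> j \<and> j < length H \<longrightarrow> real_of_int (kk C d \<xi> (Vs H i j)) - 1 - u \<le> sum z (Vs H i j)"
        proof (intro allI impI)
          fix i j assume "i \<le> j \<and> j < length H"
          then have "(i,j) \<in> Jset H" unfolding Jset_def by auto
          then show "real_of_int (kk C d \<xi> (Vs H i j)) - 1 - u \<le> sum z (Vs H i j)"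
            using zc unfolding K_def hV_def by fastforce
        qed
      qed
    qed
    then show ?thesis by auto
  qed
  then obtain F where F: "\<forall>\<xi>\<in>{1..N}. Dual \<xi> (fst (F \<xi>)) (snd (F \<xi>))" by metis
  define \<Pi> where "\<Pi> \<xi> = fst (F \<xi>)" for \<xi>
  define M where "M \<xi> = snd (F \<xi>)" for \<xi>
  have D: "Dual \<xi> (\<Pi> \<xi>) (M \<xi>)" if "\<xi> \<in> {1..N}" for \<xi> using F that unfolding \<Pi>_def M_def by auto
  define \<alpha> where "\<alpha> \<xi> S = (if \<xi> \<in> {1..N} then p \<xi> * (\<Sum>ij\<in>{ij\<in>J. hV ij = S}. \<Pi> \<xi> ij) else 0)" for \<xi> S
  define \<beta> where "\<beta> \<xi> v = (if \<xi> \<in> {1..N} \<and> v \<in> VV then - (p \<xi> * M \<xi> v) else 0)" for \<xi> v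
  have regr: "(\<Sum>S\<in>nesubs Vp. \<alpha> \<xi> S * g S) = p \<xi> * (\<Sum>ij\<in>J. \<Pi> \<xi> ij * g (hV ij))"
    if xi: "\<xi> \<in> {1..N}" for \<xi> and g :: "nat set \<Rightarrow> real"
  proof -
    have "(\<Sum>S\<in>nesubs Vp. \<alpha> \<xi> S * g S) = p \<xi> * (\<Sum>S\<in>nesubs Vp. (\<Sum>ij\<in>{ij\<in>J. hV ij = S}. \<Pi> \<xi> ij) * g S)"
      unfolding \<alpha>_def using xi by (simp add: sum_distrib_left[symmetric] mult.assoc)
    also have "(\<Sum>S\<in>nesubs Vp. (\<Sum>ij\<in>{ij\<in>J. hV ij = S}. \<Pi> \<xi> ij) * g S) = (\<Sum>ij\<in>J. \<Pi> \<xi> ij * g (hV ij))"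
      by (rule regroup[OF finNS finJ himg])
    finally show ?thesis .
  qed
  have colsum_eq: "colsum Vp \<alpha> \<beta> \<xi> v = p \<xi> * ((\<Sum>ij\<in>{ij\<in>J. v \<in> hV ij}. \<Pi> \<xi> ij) - (if v \<in> VV then M \<xi> v else 0))"
    if xi: "\<xi> \<in> {1..N}" for \<xi> v
  proof -
    have "(\<Sum>S\<in>{S\<in>nesubs Vp. v \<in> S}. \<alpha> \<xi> S) = (\<Sum>S\<in>nesubs Vp. \<alpha> \<xi> S * (if v \<in> S then 1 else 0))"
      using finNS by (simp add: sum.inter_filter[symmetric] if_distrib cong: if_cong)
    also have "\<dots> = p \<xi> * (\<Sum>ij\<in>J. \<Pi> \<xi> ij * (if v \<in> hV ij then 1 else 0))" by (rule regr[OF xi])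
    also have "(\<Sum>ij\<in>J. \<Pi> \<xi> ij * (if v \<in> hV ij then 1 else 0)) = (\<Sum>ij\<in>{ij\<in>J. v \<in> hV ij}. \<Pi> \<xi> ij)"
    proof -
      have "(\<Sum>ij\<in>J. \<Pi> \<xi> ij * (if v \<in> hV ij then 1 else 0)) = (\<Sum>ij\<in>J. if v \<in> hV ij then \<Pi> \<xi> ij else 0)"
        by (rule sum.cong) auto
      also have "\<dots> = (\<Sum>ij\<in>{ij\<in>J. v \<in> hV ij}. \<Pi> \<xi> ij)" using finJ by (simp add: sum.inter_filter)
      finally show ?thesis .
    qed
    finally show ?thesis unfolding colsum_def \<beta>_def using xi by (simp add: algebra_simps)
  qed
  have colsum_le: "colsum Vp \<alpha> \<beta> \<xi> v \<le> p \<xi> * (if v \<in> VV then w v else 0)" if xi: "\<xi> \<in> {1..N}" for \<xi> v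
  proof (cases "v \<in> VV")
    case True
    then have "(\<Sum>ij\<in>{ij\<in>J. v \<in> hV ij}. \<Pi> \<xi> ij) - M \<xi> v \<le> w v" using D[OF xi] unfolding Dual_def by blast
    then show ?thesis unfolding colsum_eq[OF xi] using True prob(1) xi by (simp add: mult_left_mono)
  next
    case False
    then have e: "{ij\<in>J. v \<in> hV ij} = {}" using hVVV by auto
    show ?thesis unfolding colsum_eq[OF xi] e using False by simp
  qed
  have colsum_out: "colsum Vp \<alpha> \<beta> \<xi> v = 0" if "\<xi> \<notin> {1..N}" for \<xi> v
  proof -
    have "\<alpha> \<xi> S = 0" for S unfolding \<alpha>_def using that by auto
    moreover have "\<beta> \<xi> v = 0" unfolding \<beta>_def using that by auto
    ultimately show ?thesis unfolding colsum_def by simp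
  qed
  have inA: "inA Vp N w \<alpha> \<beta>"
    unfolding inA_def
  proof (intro conjI ballI impI)
    fix \<xi> S assume xi: "\<xi> \<in> {1..N}" and "S \<in> nesubs Vp"
    have "0 \<le> (\<Sum>ij\<in>{ij\<in>J. hV ij = S}. \<Pi> \<xi> ij)" using D[OF xi] unfolding Dual_def by (auto intro: sum_nonneg)
    then show "0 \<le> \<alpha> \<xi> S" unfolding \<alpha>_def using xi prob(1) by simp
  next
    fix \<xi> v assume xi: "\<xi> \<in> {1..N}" and "v \<in> Vp"
    show "\<beta> \<xi> v \<le> 0" unfolding \<beta>_def using xi prob(1) D[OF xi] unfolding Dual_def by auto
  next
    fix \<xi> v assume xi: "\<xi> \<in> {1..N}" and "v \<in> Vp" and "w v = 0"
    moreover have "p \<xi> * (if v \<in> VV then w v else 0) = 0" using \<open>w v = 0\<close> by simp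
    ultimately show "colsum Vp \<alpha> \<beta> \<xi> v \<le> 0" using colsum_le[OF xi, of v] by linarith
  qed
  have phi_le: "phi Vp N p w \<alpha> \<beta> v \<le> (if v \<in> VV then 1 else 0)" if v: "v \<in> Vp" "w v > 0" for v
  proof -
    have t: "colsum Vp \<alpha> \<beta> \<xi> v / (p \<xi> * w v) \<le> (if v \<in> VV then 1 else 0)" if xi: "\<xi> \<in> {1..N}" for \<xi>
    proof (cases "p \<xi> = 0")
      case True
      then show ?thesis by simp
    next
      case False
      moreover have "0 \<le> p \<xi>" using prob(1) xi by blast
      ultimately have "p \<xi> > 0" by simp
      then have pp: "p \<xi> * w v > 0" using v by simp
      have "colsum Vp \<alpha> \<beta> \<xi> v \<le> (if v \<in> VV then 1 else 0) * (p \<xi> * w v)"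
        using colsum_le[OF xi, of v] by (cases "v \<in> VV") simp_all
      then show ?thesis using pp by (simp add: divide_le_eq)
    qed
    have "Max ((\<lambda>\<xi>. colsum Vp \<alpha> \<beta> \<xi> v / (p \<xi> * w v)) ` {1..N}) \<le> (if v \<in> VV then 1 else 0)"
      using t N1 by (simp add: Max_le_iff)
    then show ?thesis unfolding phi_def by simp
  qed
  have main: "(\<Sum>v\<in>VH H. \<theta> v) \<ge> Lstar Vp N p w b C d H * W_OF Vp x H"
    if x: "x \<in> X" and th: "\<forall>v\<in>Vp. 0 \<le> \<theta> v" and pj: "proj_ineq Vp N p w b C d \<alpha> \<beta> x \<theta>" for x \<theta>
  proof -
    have xs: "x \<in> Xsub Vp" using x Xs by auto
    define \<sigma> where "\<sigma> = sigma Vp x H"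
    have s0: "0 \<le> \<sigma>" unfolding \<sigma>_def by (rule sigma_nonneg[OF fin xs H])
    have sle: "real (card (hV ij)) - 1 - sum x (EE Vp (hV ij)) \<le> \<sigma>" if "ij \<in> J" for ij
      using s_le_sigma[OF fin xs H, of "fst ij" "snd ij"] that unfolding J_def Jset_def hV_def \<sigma>_def by auto
    define A where "A = {v\<in>Vp. w v > 0}"
    have lhs: "(\<Sum>v\<in>A. phi Vp N p w \<alpha> \<beta> v * \<theta> v) \<le> (\<Sum>v\<in>VH H. \<theta> v)"
    proof -
      have "(\<Sum>v\<in>A. phi Vp N p w \<alpha> \<beta> v * \<theta> v) \<le> (\<Sum>v\<in>A. if v \<in> VV then \<theta> v else 0)"
      proof (rule sum_mono)
        fix v assume "v \<in> A"
        then have v: "v \<in> Vp" "w v > 0" unfolding A_def by auto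
        have "phi Vp N p w \<alpha> \<beta> v * \<theta> v \<le> (if v \<in> VV then 1 else 0) * \<theta> v"
          using phi_le[OF v] th v by (simp add: mult_right_mono)
        then show "phi Vp N p w \<alpha> \<beta> v * \<theta> v \<le> (if v \<in> VV then \<theta> v else 0)" by (cases "v \<in> VV") simp_all
      qed
      also have "\<dots> = (\<Sum>v\<in>A \<inter> VV. \<theta> v)"
        using fin unfolding A_def by (simp add: sum.inter_filter[symmetric] Int_def conj_commute)
      also have "\<dots> \<le> (\<Sum>v\<in>VV. \<theta> v)"
        by (rule sum_mono2[OF finVV]) (use th VVsub in auto)
      finally show ?thesis unfolding VV_def .
    qed
    define T where "T \<xi> = (\<Sum>S\<in>nesubs Vp. \<alpha> \<xi> S * (sum x (EE Vp S) + (real_of_int (kk C d \<xi> S) - real (card S))))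
        + (\<Sum>v\<in>Vp. \<beta> \<xi> v * real (b v))" for \<xi>
    have rhs: "(\<Sum>\<xi>\<in>{1..N}. \<Sum>S\<in>nesubs Vp. \<alpha> \<xi> S * sum x (EE Vp S)) + nu Vp N b C d \<alpha> \<beta> = (\<Sum>\<xi>\<in>{1..N}. T \<xi>)"
      unfolding T_def nu_def by (simp add: sum.distrib distrib_left)
    have Tge: "p \<xi> * ((1 - \<sigma>) * LL \<xi>) \<le> T \<xi>" if xi: "\<xi> \<in> {1..N}" for \<xi>
    proof -
      have Dx: "Dual \<xi> (\<Pi> \<xi>) (M \<xi>)" by (rule D[OF xi])
      have t1: "(\<Sum>S\<in>nesubs Vp. \<alpha> \<xi> S * (sum x (EE Vp S) + (real_of_int (kk C d \<xi> S) - real (card S))))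
          = p \<xi> * (\<Sum>ij\<in>J. \<Pi> \<xi> ij * (sum x (EE Vp (hV ij)) + (real_of_int (kk C d \<xi> (hV ij)) - real (card (hV ij)))))"
        by (rule regr[OF xi])
      have t2: "(\<Sum>v\<in>Vp. \<beta> \<xi> v * real (b v)) = - (p \<xi> * (\<Sum>v\<in>VV. real (b v) * M \<xi> v))"
      proof -
        have "(\<Sum>v\<in>Vp. \<beta> \<xi> v * real (b v)) = (\<Sum>v\<in>Vp. if v \<in> VV then - (p \<xi> * (real (b v) * M \<xi> v)) else 0)"
          unfolding \<beta>_def using xi by (intro sum.cong) auto
        also have "\<dots> = (\<Sum>v\<in>Vp \<inter> VV. - (p \<xi> * (real (b v) * M \<xi> v)))"
          using fin by (simp add: sum.inter_filter[symmetric] Int_def)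
        also have "Vp \<inter> VV = VV" using VVsub by auto
        finally show ?thesis by (simp add: sum_negf sum_distrib_left)
      qed
      have t3: "(\<Sum>ij\<in>J. \<Pi> \<xi> ij * (K \<xi> ij - \<sigma>)) \<le> (\<Sum>ij\<in>J. \<Pi> \<xi> ij * (sum x (EE Vp (hV ij)) + (real_of_int (kk C d \<xi> (hV ij)) - real (card (hV ij)))))"
      proof (rule sum_mono)
        fix ij assume ij: "ij \<in> J"
        have "K \<xi> ij - \<sigma> \<le> sum x (EE Vp (hV ij)) + (real_of_int (kk C d \<xi> (hV ij)) - real (card (hV ij)))"
          using sle[OF ij] unfolding K_def by linarith
        then show "\<Pi> \<xi> ij * (K \<xi> ij - \<sigma>) \<le> \<Pi> \<xi> ij * (sum x (EE Vp (hV ij)) + (real_of_int (kk C d \<xi> (hV ij)) - real (card (hV ij))))"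
          using Dx ij unfolding Dual_def by (simp add: mult_left_mono)
      qed
      have t4: "(\<Sum>ij\<in>J. \<Pi> \<xi> ij * (K \<xi> ij - \<sigma>)) = (\<Sum>ij\<in>J. K \<xi> ij * \<Pi> \<xi> ij) - \<sigma> * (\<Sum>ij\<in>J. \<Pi> \<xi> ij)"
        by (simp add: algebra_simps sum_subtractf sum_distrib_left)
      have t5: "\<sigma> * (\<Sum>ij\<in>J. \<Pi> \<xi> ij) \<le> \<sigma> * LL \<xi>" using Dx s0 unfolding Dual_def by (simp add: mult_left_mono)
      have t6: "LL \<xi> \<le> (\<Sum>ij\<in>J. K \<xi> ij * \<Pi> \<xi> ij) - (\<Sum>v\<in>VV. real (b v) * M \<xi> v)" using Dx unfolding Dual_def by blast
      have "(1 - \<sigma>) * LL \<xi> \<le> (\<Sum>ij\<in>J. \<Pi> \<xi> ij * (sum x (EE Vp (hV ij)) + (real_of_int (kk C d \<xi> (hV ij)) - real (card (hV ij)))))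
           - (\<Sum>v\<in>VV. real (b v) * M \<xi> v)"
        using t3 t4 t5 t6 by (simp add: algebra_simps)
      then have "p \<xi> * ((1 - \<sigma>) * LL \<xi>) \<le> p \<xi> * ((\<Sum>ij\<in>J. \<Pi> \<xi> ij * (sum x (EE Vp (hV ij)) + (real_of_int (kk C d \<xi> (hV ij)) - real (card (hV ij)))))
           - (\<Sum>v\<in>VV. real (b v) * M \<xi> v))"
        using prob(1) xi by (simp add: mult_left_mono)
      also have "\<dots> = T \<xi>" unfolding T_def t1 t2 by (simp add: algebra_simps)
      finally show ?thesis .
    qed
    have "Lstar Vp N p w b C d H * W_OF Vp x H = (\<Sum>\<xi>\<in>{1..N}. p \<xi> * ((1 - \<sigma>) * LL \<xi>))"
      unfolding Lstar_def W_sigma \<sigma>_def[symmetric] LL_def sum_distrib_right by (rule sum.cong) simp_all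
    also have "\<dots> \<le> (\<Sum>\<xi>\<in>{1..N}. T \<xi>)" by (rule sum_mono) (rule Tge)
    also have "\<dots> \<le> (\<Sum>v\<in>A. phi Vp N p w \<alpha> \<beta> v * \<theta> v)" using pj rhs unfolding proj_ineq_def A_def by simp
    also have "\<dots> \<le> (\<Sum>v\<in>VH H. \<theta> v)" by (rule lhs)
    finally show ?thesis .
  qed
  show ?thesis using inA main by blast
qed


theorem theorem5:
  fixes Vp :: "nat set" and N :: nat and p :: "nat \<Rightarrow> real" and d :: "nat \<Rightarrow> nat \<Rightarrow> real"
    and C :: real and w :: "nat \<Rightarrow> real" and b :: "nat \<Rightarrow> nat" and k :: nat
    and X :: "(nat set \<Rightarrow> real) set" and H :: "nat set list"
  assumes fin: "finite Vp" and depot: "0 \<notin> Vp"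
    and Cpos: "C > 0"
    and dem: "\<forall>\<xi>\<in>{1..N}. \<forall>v\<in>Vp. d \<xi> v \<in> \<rat> \<and> 0 \<le> d \<xi> v \<and> d \<xi> v \<le> C"
    and prob: "\<forall>\<xi>\<in>{1..N}. 0 \<le> p \<xi>" "(\<Sum>\<xi>\<in>{1..N}. p \<xi>) = 1"
    and wts: "\<forall>v\<in>Vp. w v \<in> \<rat> \<and> 0 \<le> w v"
    and routes: "\<forall>R. is_route Vp R \<longrightarrow> (\<exists>y\<in>PiR C N d R. in_box Vp N b y)"
    and Xchoice: "X = Xsub Vp \<or> X = Xcvrp Vp N p d C k"
    and H: "partial_route Vp H"
  shows "(\<exists>\<alpha> \<beta>. inA Vp N w \<alpha> \<beta> \<and>
            (\<forall>x\<in>X. \<forall>\<theta> :: nat \<Rightarrow> real. (\<forall>v\<in>Vp. 0 \<le> \<theta> v) \<longrightarrow>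
               proj_ineq Vp N p w b C d \<alpha> \<beta> x \<theta> \<longrightarrow>
               (\<Sum>v\<in>VH H. \<theta> v) \<ge> Lstar Vp N p w b C d H * W_OF Vp x H))
       \<and> (\<forall>x \<theta>. inP Vp N p w b C d X x \<theta> \<longrightarrow>
               (\<Sum>v\<in>VH H. \<theta> v) \<ge> Lstar Vp N p w b C d H * W_OF Vp x H)"
  proof -
  have Xs: "X \<subseteq> Xsub Vp" using Xchoice unfolding Xcvrp_def by auto
  have wnn: "\<forall>v\<in>Vp. 0 \<le> w v" using wts by blast
  show ?thesis using part1[OF fin Cpos prob wnn routes Xs H] part2[OF fin Cpos prob(1) wnn routes Xs H] by blast
qed

end
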